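(* Let $f:\{0,1\}^{N_1}\times\{0,1\}^{N_2}\to\{0,1\}$ be a partial function. Then \[\mathrm{R}^G(\mathrm{Mar}(f))=\Omega\left( \frac{\mathrm{R}^{\textsc{CC}}(f)} {\log G}\right).\] Similarly, we also have $\mathrm{D}^G(\mathrm{Mar}(f))=\Omega(\mathrm{D}^{\textsc{CC}}(f)/\log G)$, $\mathrm{R}_0^G(\mathrm{Mar}(f))=\Omega(\mathrm{R}_0^{\textsc{CC}}(f)/\log G)$, and $\mathrm{Q}^G(\mathrm{Mar}(f))=\Omega(\mathrm{Q}^{\textsc{CC}}(f)/\log G)$.
   Context: $\mathrm{D}^{\textsc{CC}},\mathrm{R}_0^{\textsc{CC}},\mathrm{R}^{\textsc{CC}},\mathrm{Q}^{\textsc{CC}}$ denote deterministic, zero-error randomized, bounded-error randomized (private coin), and quantum communication complexity. For $a$ in the set of Alice-inputs appearing in $\mathrm{Dom}(f)$, the marginal $f_a:\{0,1\}^{N_2}\to\{0,1\}$ is $f_a(b)=f(a,b)$ whenever $(a,b)\in\mathrm{Dom}(f)$; $\mathrm{Mar}(f)$ is the set of all such marginals. An extension function with extension $G$ is an injective total $\phi:\{0,1\}^{N_2}\to\{0,1\}^G$; for partial $g$, $g^\phi(z)=g(\phi^{-1}(z))$ on $\phi(\mathrm{Dom}(g))$. For a set $S$ of functions, the extended query complexity $\mathrm{R}^G(S)$ is the minimum over such $\phi$ of $\max_{g\in S}\mathrm{R}(g^\phi)$, where $\mathrm{R}$ is bounded-error randomized query complexity; $\mathrm{D}^G,\mathrm{R}_0^G,\mathrm{Q}^G$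 are defined analogously with deterministic, zero-error randomized, and quantum query complexity. *)

theory Defs
  imports "HOL-Probability.Probability"
begin

text \<open>A partial function f : {0,1}^N1 x {0,1}^N2 -> {0,1} is given by N1, N2 and
  f :: bool list => bool list => bool option; its domain consists of the pairs of
  bit strings of the right lengths on which f is Some.\<close>

definition pdom :: "nat \<Rightarrow> nat \<Rightarrow> (bool list \<Rightarrow> bool list \<Rightarrow> bool option) \<Rightarrow> (bool list \<times> bool list) set" where
  "pdom N1 N2 f = {(a, b). length a = N1 \<and> length b = N2 \<and> f a b \<noteq> None}"

definition qdom :: "nat \<Rightarrow> (bool list \<Rightarrow> bool option) \<Rightarrow> bool list set" where
  "qdom n g = {x. length x = n \<and> g x \<noteq> None}"

definition marg :: "nat \<Rightarrow> nat \<Rightarrow> (bool list \<Rightarrow> bool list \<Rightarrow> bool option) \<Rightarrow> bool list \<Rightarrow> (bool list \<Rightarrow> bool option)" where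
  "marg N1 N2 f a = (\<lambda>b. if (a, b) \<in> pdom N1 N2 f then f a b else None)"

definition Mar :: "nat \<Rightarrow> nat \<Rightarrow> (bool list \<Rightarrow> bool list \<Rightarrow> bool option) \<Rightarrow> (bool list \<Rightarrow> bool option) set" where
  "Mar N1 N2 f = marg N1 N2 f ` {a. \<exists>b. (a, b) \<in> pdom N1 N2 f}"

definition is_extension :: "nat \<Rightarrow> nat \<Rightarrow> (bool list \<Rightarrow> bool list) \<Rightarrow> bool" where
  "is_extension N2 G \<phi> \<longleftrightarrow> inj_on \<phi> {b. length b = N2} \<and> (\<forall>b. length b = N2 \<longrightarrow> length (\<phi> b) = G)"

text \<open>g^phi (z) = g (phi^-1 z) on phi(Dom g), undefined elsewhere.\<close>
definition ext_fun :: "nat \<Rightarrow> (bool list \<Rightarrow> bool list) \<Rightarrow> (bool list \<Rightarrow> bool option) \<Rightarrow> (bool list \<Rightarrow> bool option)" where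
  "ext_fun N2 \<phi> g = (\<lambda>z. if \<exists>b. length b = N2 \<and> \<phi> b = z
                          then g (THE b. length b = N2 \<and> \<phi> b = z) else None)"

text \<open>Extended complexity: min over extensions phi of max over g in S of C(g^phi),
  where C n h is a query complexity measure of a partial function on n bits.\<close>
definition ext_cplx :: "(nat \<Rightarrow> (bool list \<Rightarrow> bool option) \<Rightarrow> real) \<Rightarrow> nat \<Rightarrow> nat \<Rightarrow> (bool list \<Rightarrow> bool option) set \<Rightarrow> real" where
  "ext_cplx C N2 G S = Inf {r. \<exists>\<phi>. is_extension N2 G \<phi> \<and>
       r = Max (insert 0 ((\<lambda>g. C G (ext_fun N2 \<phi> g)) ` S))}"

section \<open>Decision trees and query complexity\<close>

datatype dtree = DLeaf bool | DNode nat dtree dtree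

fun dt_eval :: "dtree \<Rightarrow> bool list \<Rightarrow> bool" where
  "dt_eval (DLeaf v) x = v"
| "dt_eval (DNode i l r) x = (if x ! i then dt_eval r x else dt_eval l x)"

fun dt_depth :: "dtree \<Rightarrow> nat" where
  "dt_depth (DLeaf v) = 0"
| "dt_depth (DNode i l r) = Suc (max (dt_depth l) (dt_depth r))"

fun dt_cost :: "dtree \<Rightarrow> bool list \<Rightarrow> nat" where
  "dt_cost (DLeaf v) x = 0"
| "dt_cost (DNode i l r) x = Suc (if x ! i then dt_cost r x else dt_cost l x)"

fun dt_valid :: "nat \<Rightarrow> dtree \<Rightarrow> bool" where
  "dt_valid n (DLeaf v) = True"
| "dt_valid n (DNode i l r) = (i < n \<and> dt_valid n l \<and> dt_valid n r)"

definition D_query :: "nat \<Rightarrow> (bool list \<Rightarrow> bool option) \<Rightarrow> real" where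
  "D_query n g = real (Inf {d. \<exists>T. dt_valid n T \<and> dt_depth T = d \<and>
                                 (\<forall>x\<in>qdom n g. dt_eval T x = the (g x))})"

definition R_query :: "nat \<Rightarrow> (bool list \<Rightarrow> bool option) \<Rightarrow> real" where
  "R_query n g = real (Inf {d. \<exists>P :: dtree pmf.
      (\<forall>T\<in>set_pmf P. dt_valid n T \<and> dt_depth T \<le> d) \<and>
      (\<forall>x\<in>qdom n g. measure_pmf.prob P {T. dt_eval T x = the (g x)} \<ge> 2/3)})"

text \<open>zero error, worst-case (over inputs) expected number of queries\<close>
definition R0_query :: "nat \<Rightarrow> (bool list \<Rightarrow> bool option) \<Rightarrow> real" where
  "R0_query n g = Inf {r. \<exists>P :: dtree pmf.
      (\<forall>T\<in>set_pmf P. dt_valid n T \<and> (\<forall>x\<in>qdom n g. dt_eval T x = the (g x))) \<and>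
      (\<forall>x\<in>qdom n g. integrable (measure_pmf P) (\<lambda>T. real (dt_cost T x))) \<and>
      r = Max (insert 0 ((\<lambda>x. measure_pmf.expectation P (\<lambda>T. real (dt_cost T x))) ` qdom n g))}"

section \<open>Quantum states and unitaries (finite-dimensional, basis indexed by a finite set)\<close>

definition unitary_on :: "'a set \<Rightarrow> ('a \<Rightarrow> 'a \<Rightarrow> complex) \<Rightarrow> bool" where
  "unitary_on B U \<longleftrightarrow> (\<forall>x\<in>B. \<forall>y\<in>B. (\<Sum>z\<in>B. cnj (U z x) * U z y) = (if x = y then 1 else 0))"

definition qapply :: "'a set \<Rightarrow> ('a \<Rightarrow> 'a \<Rightarrow> complex) \<Rightarrow> ('a \<Rightarrow> complex) \<Rightarrow> ('a \<Rightarrow> complex)" where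
  "qapply B U \<psi> = (\<lambda>x. \<Sum>y\<in>B. U x y * \<psi> y)"

section \<open>Quantum query complexity\<close>

text \<open>Basis states |i, c, w>: query index i (i = n is the null query), answer bit c,
  workspace w < W.\<close>
definition qbasis :: "nat \<Rightarrow> nat \<Rightarrow> (nat \<times> bool \<times> nat) set" where
  "qbasis n W = {(i, c, w). i \<le> n \<and> w < W}"

text \<open>O_x |i,c,w> = |i, c xor x_i, w> (x_n := 0)\<close>
definition qoracle :: "bool list \<Rightarrow> (nat \<times> bool \<times> nat \<Rightarrow> complex) \<Rightarrow> (nat \<times> bool \<times> nat \<Rightarrow> complex)" where
  "qoracle x \<psi> = (\<lambda>(i, c, w). \<psi> (i, c \<noteq> (i < length x \<and> x ! i), w))"

fun qq_rest :: "(nat \<times> bool \<times> nat) set \<Rightarrow> bool list \<Rightarrow> (nat \<times> bool \<times> nat \<Rightarrow> nat \<times> bool \<times> nat \<Rightarrow> complex) list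
                 \<Rightarrow> (nat \<times> bool \<times> nat \<Rightarrow> complex) \<Rightarrow> (nat \<times> bool \<times> nat \<Rightarrow> complex)" where
  "qq_rest B x [] \<psi> = \<psi>"
| "qq_rest B x (U # Us) \<psi> = qq_rest B x Us (qapply B U (qoracle x \<psi>))"

text \<open>final state of U_T O_x ... O_x U_1 O_x U_0 |0,0,0>\<close>
definition qq_final :: "(nat \<times> bool \<times> nat) set \<Rightarrow> bool list \<Rightarrow> (nat \<times> bool \<times> nat \<Rightarrow> nat \<times> bool \<times> nat \<Rightarrow> complex)
                 \<Rightarrow> (nat \<times> bool \<times> nat \<Rightarrow> nat \<times> bool \<times> nat \<Rightarrow> complex) list \<Rightarrow> (nat \<times> bool \<times> nat \<Rightarrow> complex)" where
  "qq_final B x U0 Us = qq_rest B x Us (qapply B U0 (\<lambda>k. if k = (0, False, 0) then 1 else 0))"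

text \<open>bounded error (1/3); T = number of oracle calls; output = function of the measured basis state\<close>
definition Q_query :: "nat \<Rightarrow> (bool list \<Rightarrow> bool option) \<Rightarrow> real" where
  "Q_query n g = real (Inf {T. \<exists>W U0 Us out.
      0 < W \<and> length Us = T \<and> unitary_on (qbasis n W) U0 \<and> (\<forall>U\<in>set Us. unitary_on (qbasis n W) U) \<and>
      (\<forall>x\<in>qdom n g. (\<Sum>k\<in>{k\<in>qbasis n W. out k = the (g x)}. (cmod (qq_final (qbasis n W) x U0 Us k))\<^sup>2) \<ge> 2/3)})"

section \<open>Classical communication complexity\<close>

datatype ('a, 'b) ptree = PLeaf bool
  | PA "'a \<Rightarrow> bool" "('a, 'b) ptree" "('a, 'b) ptree"
  | PB "'b \<Rightarrow> bool" "('a, 'b) ptree" "('a, 'b) ptree"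

fun p_eval :: "('a, 'b) ptree \<Rightarrow> 'a \<Rightarrow> 'b \<Rightarrow> bool" where
  "p_eval (PLeaf v) a b = v"
| "p_eval (PA h l r) a b = (if h a then p_eval r a b else p_eval l a b)"
| "p_eval (PB h l r) a b = (if h b then p_eval r a b else p_eval l a b)"

fun p_depth :: "('a, 'b) ptree \<Rightarrow> nat" where
  "p_depth (PLeaf v) = 0"
| "p_depth (PA h l r) = Suc (max (p_depth l) (p_depth r))"
| "p_depth (PB h l r) = Suc (max (p_depth l) (p_depth r))"

fun p_cost :: "('a, 'b) ptree \<Rightarrow> 'a \<Rightarrow> 'b \<Rightarrow> nat" where
  "p_cost (PLeaf v) a b = 0"
| "p_cost (PA h l r) a b = Suc (if h a then p_cost r a b else p_cost l a b)"
| "p_cost (PB h l r) a b = Suc (if h b then p_cost r a b else p_cost l a b)"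

definition D_CC :: "nat \<Rightarrow> nat \<Rightarrow> (bool list \<Rightarrow> bool list \<Rightarrow> bool option) \<Rightarrow> real" where
  "D_CC N1 N2 f = real (Inf {d. \<exists>P :: (bool list, bool list) ptree. p_depth P = d \<and>
      (\<forall>(a, b)\<in>pdom N1 N2 f. p_eval P a b = the (f a b))})"

text \<open>private coins: Alice's random string r ~ pA, Bob's s ~ pB, independent\<close>
definition R_CC :: "nat \<Rightarrow> nat \<Rightarrow> (bool list \<Rightarrow> bool list \<Rightarrow> bool option) \<Rightarrow> real" where
  "R_CC N1 N2 f = real (Inf {d. \<exists>(P :: (bool list \<times> nat, bool list \<times> nat) ptree) (pA :: nat pmf) (pB :: nat pmf).
      p_depth P = d \<and>
      (\<forall>(a, b)\<in>pdom N1 N2 f. measure_pmf.prob (pair_pmf pA pB)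
          {(r, s). p_eval P (a, r) (b, s) = the (f a b)} \<ge> 2/3)})"

definition R0_CC :: "nat \<Rightarrow> nat \<Rightarrow> (bool list \<Rightarrow> bool list \<Rightarrow> bool option) \<Rightarrow> real" where
  "R0_CC N1 N2 f = Inf {c. \<exists>(P :: (bool list \<times> nat, bool list \<times> nat) ptree) (pA :: nat pmf) (pB :: nat pmf).
      (\<forall>r\<in>set_pmf pA. \<forall>s\<in>set_pmf pB. \<forall>(a, b)\<in>pdom N1 N2 f. p_eval P (a, r) (b, s) = the (f a b)) \<and>
      c = Max (insert 0 ((\<lambda>(a, b). measure_pmf.expectation (pair_pmf pA pB)
                  (\<lambda>(r, s). real (p_cost P (a, r) (b, s)))) ` pdom N1 N2 f))}"

section \<open>Quantum communication complexity (no prior entanglement)\<close>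

text \<open>m qubits, computational basis = bit strings of length m.  Each qubit is held by Alice
  (True) or Bob (False).  In each round the speaker applies a unitary depending on her/his
  input that acts only on the qubits she/he holds, and then sends a set T of her/his qubits
  to the other party; the cost is the total number of qubits sent.  At the end qubit o is
  measured and gives the output.\<close>

definition qbits :: "nat \<Rightarrow> bool list set" where
  "qbits m = {xs. length xs = m}"

text \<open>U acts as V (x) Id where V acts on the qubits in S\<close>
definition local_on :: "nat \<Rightarrow> nat set \<Rightarrow> (bool list \<Rightarrow> bool list \<Rightarrow> complex) \<Rightarrow> bool" where
  "local_on m S U \<longleftrightarrow>
     (\<forall>x\<in>qbits m. \<forall>y\<in>qbits m. (\<exists>j<m. j \<notin> S \<and> x ! j \<noteq> y ! j) \<longrightarrow> U x y = 0) \<and>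
     (\<forall>x\<in>qbits m. \<forall>y\<in>qbits m. \<forall>x'\<in>qbits m. \<forall>y'\<in>qbits m.
        (\<forall>j<m. j \<notin> S \<longrightarrow> x ! j = y ! j \<and> x' ! j = y' ! j) \<and>
        (\<forall>j<m. j \<in> S \<longrightarrow> x ! j = x' ! j \<and> y ! j = y' ! j) \<longrightarrow> U x y = U x' y')"

type_synonym qround = "bool \<times> (bool list \<Rightarrow> bool list \<Rightarrow> bool list \<Rightarrow> complex) \<times> nat set"

fun qcc_valid :: "nat \<Rightarrow> nat \<Rightarrow> nat \<Rightarrow> (nat \<Rightarrow> bool) \<Rightarrow> qround list \<Rightarrow> bool" where
  "qcc_valid N1 N2 m own [] = True"
| "qcc_valid N1 N2 m own ((p, Uf, T) # rs) =
     ((\<forall>inp. length inp = (if p then N1 else N2) \<longrightarrow>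
          unitary_on (qbits m) (Uf inp) \<and> local_on m {j. j < m \<and> own j = p} (Uf inp)) \<and>
      T \<subseteq> {j. j < m \<and> own j = p} \<and>
      qcc_valid N1 N2 m (\<lambda>j. if j \<in> T then \<not> own j else own j) rs)"

fun qcc_run :: "nat \<Rightarrow> qround list \<Rightarrow> bool list \<Rightarrow> bool list \<Rightarrow> (bool list \<Rightarrow> complex) \<Rightarrow> (bool list \<Rightarrow> complex)" where
  "qcc_run m [] a b \<psi> = \<psi>"
| "qcc_run m ((p, Uf, T) # rs) a b \<psi> = qcc_run m rs a b (qapply (qbits m) (Uf (if p then a else b)) \<psi>)"

definition qcc_cost :: "qround list \<Rightarrow> nat" where
  "qcc_cost rs = sum_list (map (\<lambda>(p, Uf, T). card T) rs)"

definition Q_CC :: "nat \<Rightarrow> nat \<Rightarrow> (bool list \<Rightarrow> bool list \<Rightarrow> bool option) \<Rightarrow> real" where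
  "Q_CC N1 N2 f = real (Inf {c. \<exists>m own rs oq. oq < m \<and> qcc_valid N1 N2 m own rs \<and> c = qcc_cost rs \<and>
      (\<forall>(a, b)\<in>pdom N1 N2 f.
         (\<Sum>xs\<in>{xs\<in>qbits m. xs ! oq = the (f a b)}.
            (cmod (qcc_run m rs a b (\<lambda>xs. if xs = replicate m False then 1 else 0) xs))\<^sup>2) \<ge> 2/3)})"

end

theory Submission
  imports Defs
begin


lemma finite_len_bool: "finite {xs :: bool list. length xs = n}"
  using finite_lists_length_eq[of "UNIV :: bool set" n] by simp

lemma Mar_finite: "finite (Mar N1 N2 f)"
proof -
  have "Mar N1 N2 f \<subseteq> marg N1 N2 f ` {a. length a = N1}"
    unfolding Mar_def pdom_def by auto
  thus ?thesis using finite_len_bool by (meson finite_surj)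
qed

lemma ext_fun_app:
  assumes "is_extension N2 G \<phi>" "length b = N2"
  shows "ext_fun N2 \<phi> g (\<phi> b) = g b"
proof -
  have "(THE b'. length b' = N2 \<and> \<phi> b' = \<phi> b) = b"
    using assms unfolding is_extension_def
    by (intro the_equality) (auto dest: inj_onD)
  thus ?thesis using assms unfolding ext_fun_def by auto
qed

lemma pdom_qdom:
  assumes "is_extension N2 G \<phi>" "(a, b) \<in> pdom N1 N2 f"
  shows "\<phi> b \<in> qdom G (ext_fun N2 \<phi> (marg N1 N2 f a))"
    and "the (ext_fun N2 \<phi> (marg N1 N2 f a) (\<phi> b)) = the (f a b)"
  using assms ext_fun_app[OF assms(1)] unfolding qdom_def pdom_def marg_def is_extension_def
  by auto

lemma ext_exists: "N2 \<le> G \<Longrightarrow> is_extension N2 G (\<lambda>b. b @ replicate (G - length b) False)"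
  unfolding is_extension_def inj_on_def by auto

lemma ext_bound:
  assumes "N2 \<le> G" "K > 0"
    and H: "\<And>\<phi>. is_extension N2 G \<phi> \<Longrightarrow> X \<le> K * (Max (insert 0 ((\<lambda>g. C G (ext_fun N2 \<phi> g)) ` Mar N1 N2 f)) + 1)"
  shows "X \<le> K * (ext_cplx C N2 G (Mar N1 N2 f) + 1)"
proof -
  let ?S = "{r. \<exists>\<phi>. is_extension N2 G \<phi> \<and> r = Max (insert 0 ((\<lambda>g. C G (ext_fun N2 \<phi> g)) ` Mar N1 N2 f))}"
  have ne: "?S \<noteq> {}" using ext_exists[OF assms(1)] by auto
  have "X / K - 1 \<le> Inf ?S"
  proof (rule cInf_greatest[OF ne])
    fix r assume "r \<in> ?S"
    then obtain \<phi> where "is_extension N2 G \<phi>" "r = Max (insert 0 ((\<lambda>g. C G (ext_fun N2 \<phi> g)) ` Mar N1 N2 f))" by auto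
    with H[of \<phi>] assms(2) show "X / K - 1 \<le> r" by (simp add: field_simps)
  qed
  thus ?thesis using assms(2) unfolding ext_cplx_def by (simp add: field_simps)
qed

lemma Max_marg:
  assumes "(a, b) \<in> pdom N1 N2 f"
  shows "C G (ext_fun N2 \<phi> (marg N1 N2 f a)) \<le> Max (insert 0 ((\<lambda>g. C G (ext_fun N2 \<phi> g)) ` Mar N1 N2 f))"
  using assms Mar_finite[of N1 N2 f] unfolding Mar_def
  by (intro Max_ge) auto

lemma Max_nonneg: "finite S \<Longrightarrow> 0 \<le> Max (insert (0::real) S)"
  by (simp add: Max_ge)


fun ftree :: "(bool list \<Rightarrow> bool option) \<Rightarrow> nat \<Rightarrow> bool list \<Rightarrow> dtree" where
  "ftree g 0 pre = DLeaf (the (g pre))"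
| "ftree g (Suc k) pre = DNode (length pre) (ftree g k (pre @ [False])) (ftree g k (pre @ [True]))"

lemma ftree_props:
  "length pre + k = n \<Longrightarrow> length x = n \<Longrightarrow> take (length pre) x = pre \<Longrightarrow>
     dt_eval (ftree g k pre) x = the (g x) \<and> dt_valid n (ftree g k pre) \<and> dt_depth (ftree g k pre) = k"
proof (induction k arbitrary: pre x)
  case 0
  then show ?case by simp
next
  case (Suc k)
  have lt: "length pre < length x" using Suc.prems by simp
  have tk: "take (Suc (length pre)) x = pre @ [x ! length pre]"
    using Suc.prems(3) lt by (simp add: take_Suc_conv_app_nth)
  have IH1: "dt_eval (ftree g k (pre @ [x ! length pre])) x = the (g x) \<and> dt_valid n (ftree g k (pre @ [x ! length pre])) \<and> dt_depth (ftree g k (pre @ [x ! length pre])) = k"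
    using Suc.IH[of "pre @ [x ! length pre]" x] Suc.prems tk by simp
  have v: "dt_valid n (ftree g k (pre @ [b])) \<and> dt_depth (ftree g k (pre @ [b])) = k" for b
  proof -
    define y where "y = take (length pre) x @ b # drop (Suc (length pre)) x"
    have "length y = n" using Suc.prems lt unfolding y_def by simp
    moreover have "take (length (pre @ [b])) y = pre @ [b]" using Suc.prems lt unfolding y_def by simp
    ultimately show ?thesis using Suc.IH[of "pre @ [b]" y] Suc.prems by simp
  qed
  show ?case using IH1 v[of True] v[of False] lt Suc.prems
    by (cases "x ! length pre") auto
qed

lemma exists_tree: "\<exists>T. dt_valid n T \<and> dt_depth T = n \<and> (\<forall>x. length x = n \<longrightarrow> dt_eval T x = the (g x))"
  using ftree_props[where pre="[]" and k=n and n=n and g=g] ftree_props[where pre="[]" and k=n and n=n and g=g and x="replicate n False"]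
  by (intro exI[of _ "ftree g n []"]) auto

fun prune :: "(nat \<Rightarrow> bool option) \<Rightarrow> dtree \<Rightarrow> dtree" where
  "prune K (DLeaf v) = DLeaf v"
| "prune K (DNode i l r) = (case K i of Some True \<Rightarrow> prune K r | Some False \<Rightarrow> prune K l
      | None \<Rightarrow> DNode i (prune (K(i := Some False)) l) (prune (K(i := Some True)) r))"

lemma prune_eval:
  "(\<forall>i v. K i = Some v \<longrightarrow> x ! i = v) \<Longrightarrow>
     dt_eval (prune K T) x = dt_eval T x \<and> dt_cost (prune K T) x \<le> dt_cost T x"
proof (induction T arbitrary: K)
  case (DLeaf v) then show ?case by simp
next
  case (DNode i l r)
  show ?case
  proof (cases "K i")
    case None
    have c: "\<forall>j v. (K(i := Some (x ! i))) j = Some v \<longrightarrow> x ! j = v" using DNode.prems by auto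
    show ?thesis
    proof (cases "x ! i")
      case True
      then show ?thesis using None DNode.IH(2)[OF c] by (simp add: fun_upd_def)
    next
      case False
      then show ?thesis using None DNode.IH(1)[OF c] by (simp add: fun_upd_def)
    qed
  next
    case (Some b)
    have xi: "x ! i = b" using DNode.prems Some by auto
    show ?thesis using Some xi DNode.IH[OF DNode.prems] by (cases b) auto
  qed
qed

lemma prune_valid: "dt_valid n T \<Longrightarrow> dt_valid n (prune K T)"
  by (induction T arbitrary: K) (auto split: option.split bool.split)

lemma prune_depth: "dt_valid n T \<Longrightarrow> dt_depth (prune K T) \<le> card {i. i < n \<and> K i = None}"
proof (induction T arbitrary: K)
  case (DLeaf v) then show ?case by simp
next
  case (DNode i l r)
  show ?case
  proof (cases "K i")
    case None
    have fin: "finite {i. i < n \<and> K i = None}" by simp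
    have eq: "{j. j < n \<and> (K(i := Some b)) j = None} = {j. j < n \<and> K j = None} - {i}" for b by auto
    have mem: "i \<in> {j. j < n \<and> K j = None}" using None DNode.prems by simp
    have cc: "card {j. j < n \<and> (K(i := Some b)) j = None} = card {j. j < n \<and> K j = None} - 1" for b
      unfolding eq using fin mem by (simp add: card_Diff_singleton)
    have pos: "card {j. j < n \<and> K j = None} > 0" using fin mem card_gt_0_iff by blast
    have "dt_depth (prune (K(i := Some False)) l) \<le> card {j. j < n \<and> (K(i := Some False)) j = None}"
      by (rule DNode.IH(1)) (use DNode.prems in simp)
    hence 1: "dt_depth (prune (K(i := Some False)) l) \<le> card {j. j < n \<and> K j = None} - 1"
      using cc[of False] by linarith
    have "dt_depth (prune (K(i := Some True)) r) \<le> card {j. j < n \<and> (K(i := Some True)) j = None}"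
      by (rule DNode.IH(2)) (use DNode.prems in simp)
    hence 2: "dt_depth (prune (K(i := Some True)) r) \<le> card {j. j < n \<and> K j = None} - 1"
      using cc[of True] by linarith
    have "dt_depth (prune K (DNode i l r)) = Suc (max (dt_depth (prune (K(i := Some False)) l)) (dt_depth (prune (K(i := Some True)) r)))"
      using None by simp
    with 1 2 pos show ?thesis by linarith
  next
    case (Some b)
    then show ?thesis using DNode by (cases b) auto
  qed
qed

lemma prune_depth0: "dt_valid n T \<Longrightarrow> dt_depth (prune (\<lambda>_. None) T) \<le> n"
  using prune_depth[of n T "\<lambda>_. None"] by simp

fun walk :: "dtree \<Rightarrow> bool list \<Rightarrow> dtree" where
  "walk T [] = T"
| "walk (DLeaf v) (b # bs) = DLeaf v"
| "walk (DNode i l r) (b # bs) = walk (if b then r else l) bs"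

lemma walk_snoc: "walk T (ans @ [b]) = (case walk T ans of DLeaf v \<Rightarrow> DLeaf v | DNode i l r \<Rightarrow> if b then r else l)"
  by (induction T ans rule: walk.induct) (auto split: dtree.split)

lemma walk_valid: "dt_valid n T \<Longrightarrow> dt_valid n (walk T ans)"
  by (induction T ans rule: walk.induct) auto

fun sendA :: "nat \<Rightarrow> nat \<Rightarrow> ('a \<Rightarrow> nat) \<Rightarrow> (nat \<Rightarrow> ('a, 'b) ptree) \<Rightarrow> ('a, 'b) ptree" where
  "sendA 0 acc v K = K acc"
| "sendA (Suc j) acc v K = PA (\<lambda>\<alpha>. odd (v \<alpha> div 2 ^ j)) (sendA j (2 * acc) v K) (sendA j (2 * acc + 1) v K)"

lemma sendA_sem:
  "p_eval (sendA j acc v K) \<alpha> \<beta> = p_eval (K (acc * 2 ^ j + v \<alpha> mod 2 ^ j)) \<alpha> \<beta> \<and>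
   p_cost (sendA j acc v K) \<alpha> \<beta> = j + p_cost (K (acc * 2 ^ j + v \<alpha> mod 2 ^ j)) \<alpha> \<beta>"
proof (induction j arbitrary: acc)
  case 0 then show ?case by simp
next
  case (Suc j)
  have m: "v \<alpha> mod 2 ^ Suc j = 2 ^ j * (v \<alpha> div 2 ^ j mod 2) + v \<alpha> mod 2 ^ j"
    using mod_mult2_eq[of "v \<alpha>" "2 ^ j" 2] by (simp add: mult.commute)
  show ?case
  proof (cases "odd (v \<alpha> div 2 ^ j)")
    case True
    hence "v \<alpha> div 2 ^ j mod 2 = 1" by (simp add: odd_iff_mod_2_eq_one)
    hence "acc * 2 ^ Suc j + v \<alpha> mod 2 ^ Suc j = (2 * acc + 1) * 2 ^ j + v \<alpha> mod 2 ^ j"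
      using m by (simp add: algebra_simps)
    note eq = this
    show ?thesis unfolding eq using True Suc.IH[of "2 * acc + 1"] by simp
  next
    case False
    hence "v \<alpha> div 2 ^ j mod 2 = 0" by presburger
    hence "acc * 2 ^ Suc j + v \<alpha> mod 2 ^ Suc j = (2 * acc) * 2 ^ j + v \<alpha> mod 2 ^ j"
      using m by (simp add: algebra_simps)
    note eq = this
    show ?thesis unfolding eq using False Suc.IH[of "2 * acc"] by simp
  qed
qed

lemma sendA_depth: "(\<And>u. p_depth (K u) \<le> D) \<Longrightarrow> p_depth (sendA j acc v K) \<le> j + D"
  by (induction j arbitrary: acc) (auto simp: max_def)

fun leafval :: "dtree \<Rightarrow> bool" where
  "leafval (DLeaf v) = v" | "leafval (DNode i l r) = False"
fun isnode :: "dtree \<Rightarrow> bool" where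
  "isnode (DLeaf v) = False" | "isnode (DNode i l r) = True"
fun nidx :: "dtree \<Rightarrow> nat" where
  "nidx (DLeaf v) = 0" | "nidx (DNode i l r) = i"

definition outA :: "('a \<Rightarrow> dtree) \<Rightarrow> bool list \<Rightarrow> ('a, 'b) ptree" where
  "outA ts ans = PA (\<lambda>\<alpha>. leafval (walk (ts \<alpha>) ans)) (PLeaf False) (PLeaf True)"

fun proto :: "nat \<Rightarrow> ('a \<Rightarrow> dtree) \<Rightarrow> ('b \<Rightarrow> bool list) \<Rightarrow> nat \<Rightarrow> bool list \<Rightarrow> ('a, 'b) ptree" where
  "proto l ts xs 0 ans = outA ts ans"
| "proto l ts xs (Suc d) ans = PA (\<lambda>\<alpha>. isnode (walk (ts \<alpha>) ans)) (outA ts ans)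
     (sendA l 0 (\<lambda>\<alpha>. nidx (walk (ts \<alpha>) ans))
        (\<lambda>u. PB (\<lambda>\<beta>. xs \<beta> ! u) (proto l ts xs d (ans @ [False])) (proto l ts xs d (ans @ [True]))))"

lemma proto_depth: "p_depth (proto l ts xs d ans) \<le> (l + 2) * d + 1"
proof (induction d arbitrary: ans)
  case 0 then show ?case by (simp add: outA_def)
next
  case (Suc d)
  have "p_depth (sendA l 0 (\<lambda>\<alpha>. nidx (walk (ts \<alpha>) ans))
        (\<lambda>u. PB (\<lambda>\<beta>. xs \<beta> ! u) (proto l ts xs d (ans @ [False])) (proto l ts xs d (ans @ [True])))) \<le> l + ((l + 2) * d + 2)"
    by (rule sendA_depth) (use Suc.IH in auto)
  then show ?case by (simp add: outA_def)
qed

lemma proto_sem: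
  assumes "G \<le> 2 ^ l"
  shows "dt_valid G (walk (ts \<alpha>) ans) \<Longrightarrow> dt_depth (walk (ts \<alpha>) ans) \<le> d \<Longrightarrow>
    p_eval (proto l ts xs d ans) \<alpha> \<beta> = dt_eval (walk (ts \<alpha>) ans) (xs \<beta>) \<and>
    p_cost (proto l ts xs d ans) \<alpha> \<beta> \<le> (l + 2) * dt_cost (walk (ts \<alpha>) ans) (xs \<beta>) + 2"
proof (induction d arbitrary: ans)
  case 0
  then show ?case by (cases "walk (ts \<alpha>) ans") (auto simp: outA_def)
next
  case (Suc d)
  show ?case
  proof (cases "walk (ts \<alpha>) ans")
    case (DLeaf v)
    then show ?thesis by (simp add: outA_def)
  next
    case (DNode i lt rt)
    have il: "i < 2 ^ l" using Suc.prems DNode assms by auto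
    let ?b = "xs \<beta> ! i"
    have w: "walk (ts \<alpha>) (ans @ [?b]) = (if ?b then rt else lt)" using DNode by (simp add: walk_snoc)
    have v: "dt_valid G (walk (ts \<alpha>) (ans @ [?b]))" using w Suc.prems DNode by auto
    have dd: "dt_depth (walk (ts \<alpha>) (ans @ [?b])) \<le> d" using w Suc.prems DNode by auto
    note IH = Suc.IH[OF v dd]
    have s: "p_eval (sendA l 0 (\<lambda>\<alpha>. nidx (walk (ts \<alpha>) ans))
        (\<lambda>u. PB (\<lambda>\<beta>. xs \<beta> ! u) (proto l ts xs d (ans @ [False])) (proto l ts xs d (ans @ [True])))) \<alpha> \<beta>
      = p_eval (proto l ts xs d (ans @ [?b])) \<alpha> \<beta>
      \<and> p_cost (sendA l 0 (\<lambda>\<alpha>. nidx (walk (ts \<alpha>) ans))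
        (\<lambda>u. PB (\<lambda>\<beta>. xs \<beta> ! u) (proto l ts xs d (ans @ [False])) (proto l ts xs d (ans @ [True])))) \<alpha> \<beta>
      = l + Suc (p_cost (proto l ts xs d (ans @ [?b])) \<alpha> \<beta>)"
      using sendA_sem[of l 0 "\<lambda>\<alpha>. nidx (walk (ts \<alpha>) ans)" "\<lambda>u. PB (\<lambda>\<beta>. xs \<beta> ! u) (proto l ts xs d (ans @ [False])) (proto l ts xs d (ans @ [True]))" \<alpha> \<beta>]
      DNode il by (cases ?b) auto
    have e: "dt_eval (walk (ts \<alpha>) ans) (xs \<beta>) = dt_eval (walk (ts \<alpha>) (ans @ [?b])) (xs \<beta>)"
      using w DNode by simp
    have c: "dt_cost (walk (ts \<alpha>) ans) (xs \<beta>) = Suc (dt_cost (walk (ts \<alpha>) (ans @ [?b])) (xs \<beta>))"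
      using w DNode by simp
    show ?thesis using s IH e c DNode by (simp add: algebra_simps)
  qed
qed


lemma Inf_nat_le: "x \<in> S \<Longrightarrow> Inf S \<le> (x::nat)" by (rule cInf_lower) auto

definition nbits :: "nat \<Rightarrow> nat" where "nbits n = (LEAST l. n \<le> 2 ^ l)"

lemma nbits_ge: "n \<le> 2 ^ nbits n"
  unfolding nbits_def by (rule LeastI[of _ n]) (simp add: less_imp_le)

lemma nbits_log: assumes "1 \<le> n" shows "real (nbits n) \<le> log 2 (real n) + 1"
proof (cases "nbits n")
  case 0 then show ?thesis using assms by simp
next
  case (Suc k)
  have "\<not> n \<le> 2 ^ k" using Suc unfolding nbits_def by (metis lessI not_less_Least)
  hence "real (2 ^ k) < real n" by simp
  hence "log 2 (real (2 ^ k)) < log 2 (real n)" by (intro log_less) auto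
  hence "real k < log 2 (real n)" by (simp add: log_nat_power)
  then show ?thesis using Suc by simp
qed

lemma finite_pdom: "finite (pdom N1 N2 f)"
proof -
  have "pdom N1 N2 f \<subseteq> {a. length a = N1} \<times> {b. length b = N2}" unfolding pdom_def by auto
  thus ?thesis using finite_len_bool by (meson finite_SigmaI finite_subset)
qed

lemma finite_qdom: "finite (qdom n g)"
  using finite_len_bool[of n] unfolding qdom_def by (rule rev_finite_subset) auto

lemma finite_domA: "finite {a. \<exists>b. (a, b) \<in> pdom N1 N2 f}"
  using finite_len_bool[of N1] unfolding pdom_def by (rule rev_finite_subset) auto

lemma dt_cost_le_depth: "dt_cost T x \<le> dt_depth T"
  by (induction T) (auto simp: le_max_iff_disj)

lemma p_cost_le_depth: "p_cost P a b \<le> p_depth P"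
  by (induction P) (auto simp: le_max_iff_disj)

lemma D_bound:
  fixes N1 N2 G :: nat and f :: "bool list \<Rightarrow> bool list \<Rightarrow> bool option" and \<phi> :: "bool list \<Rightarrow> bool list"
  assumes ext: "is_extension N2 G \<phi>"
  defines "r \<equiv> Max (insert 0 ((\<lambda>g. D_query G (ext_fun N2 \<phi> g)) ` Mar N1 N2 f))"
  shows "D_CC N1 N2 f \<le> real (nbits G + 2) * (r + 1)"
proof -
  define A where "A = {a. \<exists>b. (a, b) \<in> pdom N1 N2 f}"
  define g where "g a = ext_fun N2 \<phi> (marg N1 N2 f a)" for a
  define S where "S a = {d. \<exists>T. dt_valid G T \<and> dt_depth T = d \<and> (\<forall>x\<in>qdom G (g a). dt_eval T x = the (g a x))}" for a
  have Sne: "S a \<noteq> {}" for a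
    using exists_tree[of G "g a"] unfolding S_def qdom_def by auto
  define T where "T a = (SOME T. dt_valid G T \<and> dt_depth T = Inf (S a) \<and> (\<forall>x\<in>qdom G (g a). dt_eval T x = the (g a x)))" for a
  have T: "dt_valid G (T a) \<and> dt_depth (T a) = Inf (S a) \<and> (\<forall>x\<in>qdom G (g a). dt_eval (T a) x = the (g a x))" for a
  proof -
    have "Inf (S a) \<in> S a" using Sne by (rule Inf_nat_def1)
    then obtain Tw where "dt_valid G Tw \<and> dt_depth Tw = Inf (S a) \<and> (\<forall>x\<in>qdom G (g a). dt_eval Tw x = the (g a x))"
      unfolding S_def by blast
    then show ?thesis unfolding T_def by (rule someI)
  qed
  have Tr: "real (dt_depth (T a)) \<le> r" if aA: "a \<in> A" for a
  proof -
    obtain b where "(a, b) \<in> pdom N1 N2 f" using aA unfolding A_def by auto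
    hence "D_query G (g a) \<le> r" unfolding r_def g_def by (rule Max_marg)
    thus ?thesis using T[of a] unfolding D_query_def S_def by simp
  qed
  define dm where "dm = Max (insert 0 ((\<lambda>a. dt_depth (T a)) ` A))"
  have finA: "finite A" unfolding A_def by (rule finite_domA)
  have dm_ge: "dt_depth (T a) \<le> dm" if "a \<in> A" for a unfolding dm_def using finA that by auto
  have dm_r: "real dm \<le> r"
  proof -
    have "dm \<in> insert 0 ((\<lambda>a. dt_depth (T a)) ` A)" unfolding dm_def using finA by (intro Max_in) auto
    moreover have "0 \<le> r" unfolding r_def using Mar_finite by (simp add: Max_ge)
    ultimately show ?thesis using Tr by auto
  qed
  define P where "P = proto (nbits G) T \<phi> dm []"
  have corr: "p_eval P a b = the (f a b)" if "(a, b) \<in> pdom N1 N2 f" for a b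
  proof -
    have aA: "a \<in> A" using that A_def by auto
    have "p_eval P a b = dt_eval (T a) (\<phi> b)"
      unfolding P_def using proto_sem[OF nbits_ge, where ts=T and \<alpha>=a and ans="[]" and d=dm and xs=\<phi> and \<beta>=b] T[of a] dm_ge[OF aA] by simp
    also have "\<dots> = the (g a (\<phi> b))" using T[of a] pdom_qdom(1)[OF ext that] unfolding g_def by auto
    also have "\<dots> = the (f a b)" using pdom_qdom(2)[OF ext that] unfolding g_def by simp
    finally show ?thesis .
  qed
  have "D_CC N1 N2 f \<le> real (p_depth P)"
    unfolding D_CC_def using corr by (intro of_nat_mono Inf_nat_le) auto
  also have "\<dots> \<le> real ((nbits G + 2) * dm + 1)" unfolding P_def using proto_depth by (intro of_nat_mono) 
  also have "\<dots> \<le> real (nbits G + 2) * (r + 1)"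
  proof -
    have "real ((nbits G + 2) * dm + 1) = real (nbits G + 2) * real dm + 1" by (simp add: algebra_simps)
    also have "\<dots> \<le> real (nbits G + 2) * r + real (nbits G + 2)"
      using dm_r by (intro add_mono mult_left_mono) auto
    finally show ?thesis by (simp add: algebra_simps)
  qed
  finally show ?thesis .
qed


lemma coin_facts:
  fixes A :: "'a set" and dflt :: 'b and P :: "'a \<Rightarrow> 'b pmf"
  assumes "finite A"
  defines "Q \<equiv> Pi_pmf A dflt P"
  shows "from_nat_into (set_pmf Q) r \<in> set_pmf Q"
    and "F \<in> set_pmf Q \<Longrightarrow> a \<in> A \<Longrightarrow> F a \<in> set_pmf (P a)"
    and "F \<in> set_pmf Q \<Longrightarrow> from_nat_into (set_pmf Q) (to_nat_on (set_pmf Q) F) = F"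
    and "measure_pmf.prob Q {F. Z (F a)} = (if a \<in> A then measure_pmf.prob (P a) {T. Z T} else measure_pmf.prob (return_pmf dflt) {T. Z T})"
proof -
  show "from_nat_into (set_pmf Q) r \<in> set_pmf Q" by (rule from_nat_into) (simp add: set_pmf_not_empty)
  show "F \<in> set_pmf Q \<Longrightarrow> a \<in> A \<Longrightarrow> F a \<in> set_pmf (P a)"
    unfolding Q_def using assms(1) by (auto simp: set_Pi_pmf PiE_dflt_def)
  show "F \<in> set_pmf Q \<Longrightarrow> from_nat_into (set_pmf Q) (to_nat_on (set_pmf Q) F) = F" by simp
  have "measure_pmf.prob Q {F. Z (F a)} = measure_pmf.prob (map_pmf (\<lambda>F. F a) Q) {T. Z T}" by simp
  also have "map_pmf (\<lambda>F. F a) Q = (if a \<in> A then P a else return_pmf dflt)"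
    unfolding Q_def by (rule Pi_pmf_component[OF assms(1)])
  finally show "measure_pmf.prob Q {F. Z (F a)} = (if a \<in> A then measure_pmf.prob (P a) {T. Z T} else measure_pmf.prob (return_pmf dflt) {T. Z T})"
    by simp
qed

lemma R_bound:
  fixes N1 N2 G :: nat and f :: "bool list \<Rightarrow> bool list \<Rightarrow> bool option" and \<phi> :: "bool list \<Rightarrow> bool list"
  assumes ext: "is_extension N2 G \<phi>"
  defines "r \<equiv> Max (insert 0 ((\<lambda>g. R_query G (ext_fun N2 \<phi> g)) ` Mar N1 N2 f))"
  shows "R_CC N1 N2 f \<le> real (nbits G + 2) * (r + 1)"
proof -
  define A where "A = {a. \<exists>b. (a, b) \<in> pdom N1 N2 f}"
  define g where "g a = ext_fun N2 \<phi> (marg N1 N2 f a)" for a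
  define S where "S a = {d. \<exists>P :: dtree pmf. (\<forall>T\<in>set_pmf P. dt_valid G T \<and> dt_depth T \<le> d) \<and>
      (\<forall>x\<in>qdom G (g a). measure_pmf.prob P {T. dt_eval T x = the (g a x)} \<ge> 2/3)}" for a
  have Sne: "S a \<noteq> {}" for a
  proof -
    obtain T0 where "dt_valid G T0" "dt_depth T0 = G" "\<forall>x. length x = G \<longrightarrow> dt_eval T0 x = the (g a x)"
      using exists_tree by blast
    hence "G \<in> S a" unfolding S_def qdom_def by (intro CollectI exI[of _ "return_pmf T0"]) auto
    thus ?thesis by auto
  qed
  define P where "P a = (SOME P :: dtree pmf. (\<forall>T\<in>set_pmf P. dt_valid G T \<and> dt_depth T \<le> Inf (S a)) \<and>
      (\<forall>x\<in>qdom G (g a). measure_pmf.prob P {T. dt_eval T x = the (g a x)} \<ge> 2/3))" for a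
  have Pp: "(\<forall>T\<in>set_pmf (P a). dt_valid G T \<and> dt_depth T \<le> Inf (S a)) \<and>
      (\<forall>x\<in>qdom G (g a). measure_pmf.prob (P a) {T. dt_eval T x = the (g a x)} \<ge> 2/3)" for a
  proof -
    have "Inf (S a) \<in> S a" using Sne by (rule Inf_nat_def1)
    then obtain Pw :: "dtree pmf" where "(\<forall>T\<in>set_pmf Pw. dt_valid G T \<and> dt_depth T \<le> Inf (S a)) \<and>
      (\<forall>x\<in>qdom G (g a). measure_pmf.prob Pw {T. dt_eval T x = the (g a x)} \<ge> 2/3)"
      unfolding S_def by blast
    then show ?thesis unfolding P_def by (rule someI)
  qed
  have Sr: "real (Inf (S a)) \<le> r" if aA: "a \<in> A" for a
  proof -
    obtain b where "(a, b) \<in> pdom N1 N2 f" using aA unfolding A_def by auto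
    hence "R_query G (g a) \<le> r" unfolding r_def g_def by (rule Max_marg)
    thus ?thesis unfolding R_query_def S_def by simp
  qed
  define dm where "dm = Max (insert 0 ((\<lambda>a. Inf (S a)) ` A))"
  have finA: "finite A" unfolding A_def by (rule finite_domA)
  have dm_ge: "Inf (S a) \<le> dm" if "a \<in> A" for a unfolding dm_def using finA that by auto
  have dm_r: "real dm \<le> r"
  proof -
    have "dm \<in> insert 0 ((\<lambda>a. Inf (S a)) ` A)" unfolding dm_def using finA by (intro Max_in) auto
    moreover have "0 \<le> r" unfolding r_def using Mar_finite by (simp add: Max_ge)
    ultimately show ?thesis using Sr by auto
  qed
  define Q where "Q = Pi_pmf A (DLeaf False) P"
  define enc where "enc = to_nat_on (set_pmf Q)"
  define dec where "dec = from_nat_into (set_pmf Q)"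
  define ts where "ts = (\<lambda>(a :: bool list, r :: nat). dec r a)"
  define xs where "xs = (\<lambda>(b :: bool list, s :: nat). \<phi> b)"
  define PP where "PP = proto (nbits G) ts xs dm []"
  define pA where "pA = map_pmf enc Q"
  define pB where "pB = return_pmf (0::nat)"
  have prob: "measure_pmf.prob (pair_pmf pA pB) {(r, s). p_eval PP (a, r) (b, s) = the (f a b)} \<ge> 2/3"
    if ab: "(a, b) \<in> pdom N1 N2 f" for a b
  proof -
    have aA: "a \<in> A" using ab unfolding A_def by auto
    let ?v = "the (f a b)"
    have "measure_pmf.prob (pair_pmf pA pB) {(r, s). p_eval PP (a, r) (b, s) = ?v}
        = measure_pmf.prob Q {F. p_eval PP (a, enc F) (b, 0) = ?v}"
      unfolding pA_def pB_def pair_return_pmf2 by (simp add: vimage_def)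
    also have "\<dots> = measure_pmf.prob Q ({F. p_eval PP (a, enc F) (b, 0) = ?v} \<inter> set_pmf Q)"
      by (simp add: measure_Int_set_pmf)
    also have "{F. p_eval PP (a, enc F) (b, 0) = ?v} \<inter> set_pmf Q = {F. dt_eval (F a) (\<phi> b) = ?v} \<inter> set_pmf Q"
    proof (intro set_eqI iffI)
      fix F assume F: "F \<in> {F. p_eval PP (a, enc F) (b, 0) = ?v} \<inter> set_pmf Q"
      have d: "dec (enc F) = F" using F unfolding dec_def enc_def by simp
      have Fa: "F a \<in> set_pmf (P a)" using coin_facts(2)[OF finA, of F "DLeaf False" P] F aA unfolding Q_def by auto
      have "p_eval PP (a, enc F) (b, 0) = dt_eval (F a) (\<phi> b)"
        unfolding PP_def using proto_sem[OF nbits_ge, where ts=ts and \<alpha>="(a, enc F)" and ans="[]" and d=dm and xs=xs and \<beta>="(b, 0)"]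
          Pp[of a] Fa dm_ge[OF aA] d unfolding ts_def xs_def by fastforce
      thus "F \<in> {F. dt_eval (F a) (\<phi> b) = ?v} \<inter> set_pmf Q" using F by simp
    next
      fix F assume F: "F \<in> {F. dt_eval (F a) (\<phi> b) = ?v} \<inter> set_pmf Q"
      have d: "dec (enc F) = F" using F unfolding dec_def enc_def by simp
      have Fa: "F a \<in> set_pmf (P a)" using coin_facts(2)[OF finA, of F "DLeaf False" P] F aA unfolding Q_def by auto
      have "p_eval PP (a, enc F) (b, 0) = dt_eval (F a) (\<phi> b)"
        unfolding PP_def using proto_sem[OF nbits_ge, where ts=ts and \<alpha>="(a, enc F)" and ans="[]" and d=dm and xs=xs and \<beta>="(b, 0)"]
          Pp[of a] Fa dm_ge[OF aA] d unfolding ts_def xs_def by fastforce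
      thus "F \<in> {F. p_eval PP (a, enc F) (b, 0) = ?v} \<inter> set_pmf Q" using F by simp
    qed
    also have "measure_pmf.prob Q ({F. dt_eval (F a) (\<phi> b) = ?v} \<inter> set_pmf Q) = measure_pmf.prob Q {F. dt_eval (F a) (\<phi> b) = ?v}"
      by (simp add: measure_Int_set_pmf)
    also have "\<dots> = measure_pmf.prob (P a) {T. dt_eval T (\<phi> b) = ?v}"
      using coin_facts(4)[OF finA, of "DLeaf False" P "\<lambda>T. dt_eval T (\<phi> b) = ?v" a] aA unfolding Q_def by simp
    finally show ?thesis
      using Pp[of a] pdom_qdom[OF ext ab] unfolding g_def by auto
  qed
  have "R_CC N1 N2 f \<le> real (p_depth PP)"
    unfolding R_CC_def
  proof (intro of_nat_mono Inf_nat_le CollectI)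
    show "\<exists>(P :: (bool list \<times> nat, bool list \<times> nat) ptree) (pA :: nat pmf) (pB :: nat pmf).
      p_depth P = p_depth PP \<and>
      (\<forall>(a, b)\<in>pdom N1 N2 f. measure_pmf.prob (pair_pmf pA pB)
          {(r, s). p_eval P (a, r) (b, s) = the (f a b)} \<ge> 2/3)"
      by (rule exI[of _ PP], rule exI[of _ pA], rule exI[of _ pB]) (use prob in auto)
  qed
  also have "\<dots> \<le> real ((nbits G + 2) * dm + 1)" unfolding PP_def using proto_depth by (intro of_nat_mono)
  also have "\<dots> \<le> real (nbits G + 2) * (r + 1)"
  proof -
    have "real ((nbits G + 2) * dm + 1) = real (nbits G + 2) * real dm + 1" by (simp add: algebra_simps)
    also have "\<dots> \<le> real (nbits G + 2) * r + real (nbits G + 2)"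
      using dm_r by (intro add_mono mult_left_mono) auto
    finally show ?thesis by (simp add: algebra_simps)
  qed
  finally show ?thesis .
qed


lemma pmf_integrable_bdd:
  fixes f :: "'a \<Rightarrow> real"
  shows "(\<And>x. \<bar>f x\<bar> \<le> B) \<Longrightarrow> integrable (measure_pmf p) f"
  by (intro measure_pmf.integrable_const_bound[where B=B]) auto

lemma R0_bound:
  fixes N1 N2 G :: nat and f :: "bool list \<Rightarrow> bool list \<Rightarrow> bool option" and \<phi> :: "bool list \<Rightarrow> bool list"
  assumes ext: "is_extension N2 G \<phi>"
  defines "r \<equiv> Max (insert 0 ((\<lambda>g. R0_query G (ext_fun N2 \<phi> g)) ` Mar N1 N2 f))"
  shows "R0_CC N1 N2 f \<le> real (nbits G + 2) * (r + 1) + 2"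
proof -
  define A where "A = {a. \<exists>b. (a, b) \<in> pdom N1 N2 f}"
  define g where "g a = ext_fun N2 \<phi> (marg N1 N2 f a)" for a
  define ok where "ok a P \<longleftrightarrow> (\<forall>T\<in>set_pmf P. dt_valid G T \<and> (\<forall>x\<in>qdom G (g a). dt_eval T x = the (g a x))) \<and>
      (\<forall>x\<in>qdom G (g a). integrable (measure_pmf P) (\<lambda>T. real (dt_cost T x)))" for a and P :: "dtree pmf"
  define val where "val a P = Max (insert 0 ((\<lambda>x. measure_pmf.expectation P (\<lambda>T. real (dt_cost T x))) ` qdom G (g a)))" for a and P :: "dtree pmf"
  define S where "S a = {c. \<exists>P :: dtree pmf. ok a P \<and> c = val a P}" for a
  have S_eq: "R0_query G (g a) = Inf (S a)" for a
    unfolding R0_query_def S_def ok_def val_def by simp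
  have Sne: "S a \<noteq> {}" for a
  proof -
    obtain T0 where "dt_valid G T0" "\<forall>x. length x = G \<longrightarrow> dt_eval T0 x = the (g a x)"
      using exists_tree by blast
    hence "ok a (return_pmf T0)" unfolding ok_def qdom_def
      by (auto intro: integrable_measure_pmf_finite)
    thus ?thesis unfolding S_def by auto
  qed
  have Sbdd: "bdd_below (S a)" for a
    unfolding S_def val_def using finite_qdom by (intro bdd_belowI[of _ 0]) (auto simp: Max_ge)
  have exP: "\<exists>P. ok a P \<and> val a P < R0_query G (g a) + 1" for a
  proof -
    have "Inf (S a) < Inf (S a) + 1" by simp
    then obtain c where "c \<in> S a" "c < Inf (S a) + 1" using cInf_less_iff[OF Sne Sbdd] by blast
    thus ?thesis unfolding S_eq S_def by auto
  qed
  define P where "P a = (SOME P. ok a P \<and> val a P < R0_query G (g a) + 1)" for a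
  have Pp: "ok a (P a) \<and> val a (P a) < R0_query G (g a) + 1" for a
    unfolding P_def using exP[of a] by (rule someI_ex)
  define P' where "P' a = map_pmf (prune (\<lambda>_. None)) (P a)" for a
  have finA: "finite A" unfolding A_def by (rule finite_domA)
  define Q where "Q = Pi_pmf A (DLeaf False) P'"
  define enc where "enc = to_nat_on (set_pmf Q)"
  define dec where "dec = from_nat_into (set_pmf Q)"
  define ts where "ts = (\<lambda>(a :: bool list, r :: nat). dec r a)"
  define xs where "xs = (\<lambda>(b :: bool list, s :: nat). \<phi> b)"
  define PP where "PP = proto (nbits G) ts xs G []"
  define pA where "pA = map_pmf enc Q"
  define pB where "pB = return_pmf (0::nat)"
  have decQ: "dec rr \<in> set_pmf Q" for rr unfolding dec_def Q_def by (rule coin_facts(1)[OF finA])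
  have tree_good: "dt_valid G T \<and> dt_depth T \<le> G \<and> (\<forall>x\<in>qdom G (g a). dt_eval T x = the (g a x))"
    if aA: "a \<in> A" and TP: "T \<in> set_pmf (P' a)" for a T
  proof -
    obtain T0 where T0: "T0 \<in> set_pmf (P a)" "T = prune (\<lambda>_. None) T0" using TP unfolding P'_def by auto
    have "dt_valid G T0 \<and> (\<forall>x\<in>qdom G (g a). dt_eval T0 x = the (g a x))" using Pp[of a] T0 unfolding ok_def by auto
    thus ?thesis using T0 prune_valid prune_depth0 prune_eval[of "\<lambda>_. None"] by auto
  qed
  have psem: "p_eval PP (a, rr) (b, s) = dt_eval (dec rr a) (\<phi> b) \<and>
      p_cost PP (a, rr) (b, s) \<le> (nbits G + 2) * dt_cost (dec rr a) (\<phi> b) + 2" if aA: "a \<in> A" for a b rr s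
  proof -
    have "dec rr a \<in> set_pmf (P' a)" using coin_facts(2)[OF finA decQ[of rr, unfolded Q_def] aA] .
    hence "dt_valid G (dec rr a) \<and> dt_depth (dec rr a) \<le> G" using tree_good aA by auto
    thus ?thesis unfolding PP_def
      using proto_sem[OF nbits_ge, where ts=ts and \<alpha>="(a, rr)" and ans="[]" and d=G and xs=xs and \<beta>="(b, s)"]
      unfolding ts_def xs_def by simp
  qed
  have corr: "p_eval PP (a, rr) (b, s) = the (f a b)" if ab: "(a, b) \<in> pdom N1 N2 f" for a b rr s
  proof -
    have aA: "a \<in> A" using ab unfolding A_def by auto
    have "dec rr a \<in> set_pmf (P' a)" using coin_facts(2)[OF finA decQ[of rr, unfolded Q_def] aA] .
    hence "dt_eval (dec rr a) (\<phi> b) = the (g a (\<phi> b))" using tree_good[OF aA] pdom_qdom(1)[OF ext ab] unfolding g_def by auto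
    thus ?thesis using psem[OF aA] pdom_qdom(2)[OF ext ab] unfolding g_def by simp
  qed
  define K where "K = real (nbits G + 2)"
  have Kpos: "K \<ge> 0" unfolding K_def by simp
  have expb: "measure_pmf.expectation (pair_pmf pA pB) (\<lambda>(rr, s). real (p_cost PP (a, rr) (b, s))) \<le> K * (r + 1) + 2"
    if ab: "(a, b) \<in> pdom N1 N2 f" for a b
  proof -
    have aA: "a \<in> A" using ab unfolding A_def by auto
    let ?x = "\<phi> b"
    have xq: "?x \<in> qdom G (g a)" using pdom_qdom(1)[OF ext ab] unfolding g_def .
    have supQ: "dt_cost (F a) ?x \<le> G" if "F \<in> set_pmf Q" for F
    proof -
      have "F a \<in> set_pmf (P' a)" using coin_facts(2)[OF finA that[unfolded Q_def] aA] .
      hence "dt_depth (F a) \<le> G" using tree_good[OF aA] by auto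
      thus ?thesis using dt_cost_le_depth[of "F a" ?x] by linarith
    qed
    have intQ1: "integrable (measure_pmf Q) (\<lambda>F. K * real (dt_cost (F a) ?x))"
      by (rule measure_pmf.integrable_const_bound[where B="K * real G"])
         (use supQ Kpos in \<open>auto simp: AE_measure_pmf_iff intro!: mult_left_mono\<close>)
    have intQ: "integrable (measure_pmf Q) (\<lambda>F. K * real (dt_cost (F a) ?x) + 2)"
      using intQ1 by simp
    have "measure_pmf.expectation (pair_pmf pA pB) (\<lambda>(rr, s). real (p_cost PP (a, rr) (b, s)))
        = measure_pmf.expectation Q (\<lambda>F. real (p_cost PP (a, enc F) (b, 0)))"
      unfolding pA_def pB_def pair_return_pmf2 by simp
    also have "\<dots> \<le> measure_pmf.expectation Q (\<lambda>F. K * real (dt_cost (F a) ?x) + 2)"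
    proof (rule integral_mono_AE)
      show "integrable (measure_pmf Q) (\<lambda>F. real (p_cost PP (a, enc F) (b, 0)))"
        by (rule pmf_integrable_bdd[where B="real (p_depth PP)"]) (simp add: p_cost_le_depth)
      show "integrable (measure_pmf Q) (\<lambda>F. K * real (dt_cost (F a) ?x) + 2)"
        by (rule intQ)
      show "AE F in measure_pmf Q. real (p_cost PP (a, enc F) (b, 0)) \<le> K * real (dt_cost (F a) ?x) + 2"
      proof (unfold AE_measure_pmf_iff, intro ballI)
        fix F assume F: "F \<in> set_pmf Q"
        have "dec (enc F) = F" using F unfolding dec_def enc_def by simp
        thus "real (p_cost PP (a, enc F) (b, 0)) \<le> K * real (dt_cost (F a) ?x) + 2"
          using psem[OF aA, where b=b and rr="enc F" and s=0] unfolding K_def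
          by (metis (mono_tags, lifting) of_nat_add of_nat_le_iff of_nat_mult of_nat_numeral)
      qed
    qed
    also have "\<dots> = K * measure_pmf.expectation (P' a) (\<lambda>T. real (dt_cost T ?x)) + 2"
    proof -
      have "measure_pmf.expectation Q (\<lambda>F. K * real (dt_cost (F a) ?x) + 2)
          = measure_pmf.expectation Q (\<lambda>F. K * real (dt_cost (F a) ?x)) + measure_pmf.expectation Q (\<lambda>F. 2)"
        using intQ1 by (simp add: integral_add)
      also have "measure_pmf.expectation Q (\<lambda>F. 2) = (2::real)" by simp
      also have "measure_pmf.expectation Q (\<lambda>F. K * real (dt_cost (F a) ?x)) = K * measure_pmf.expectation (map_pmf (\<lambda>F. F a) Q) (\<lambda>T. real (dt_cost T ?x))"
        by simp
      also have "map_pmf (\<lambda>F. F a) Q = P' a" unfolding Q_def using Pi_pmf_component[OF finA, of a "DLeaf False" P'] aA by simp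
      finally show ?thesis .
    qed
    also have "measure_pmf.expectation (P' a) (\<lambda>T. real (dt_cost T ?x)) \<le> r + 1"
    proof -
      have "measure_pmf.expectation (P' a) (\<lambda>T. real (dt_cost T ?x)) = measure_pmf.expectation (P a) (\<lambda>T. real (dt_cost (prune (\<lambda>_. None) T) ?x))"
        unfolding P'_def by simp
      also have "\<dots> \<le> measure_pmf.expectation (P a) (\<lambda>T. real (dt_cost T ?x))"
      proof (rule integral_mono_AE)
        show "integrable (measure_pmf (P a)) (\<lambda>T. real (dt_cost T ?x))" using Pp[of a] xq unfolding ok_def by auto
        show "integrable (measure_pmf (P a)) (\<lambda>T. real (dt_cost (prune (\<lambda>_. None) T) ?x))"
        proof (rule measure_pmf.integrable_const_bound[where B="real G"])
          show "AE T in measure_pmf (P a). norm (real (dt_cost (prune (\<lambda>_. None) T) ?x)) \<le> real G"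
          proof (unfold AE_measure_pmf_iff, intro ballI)
            fix T assume "T \<in> set_pmf (P a)"
            hence "dt_valid G T" using Pp[of a] unfolding ok_def by auto
            hence "dt_depth (prune (\<lambda>_. None) T) \<le> G" by (rule prune_depth0)
            thus "norm (real (dt_cost (prune (\<lambda>_. None) T) ?x)) \<le> real G"
              using dt_cost_le_depth[of "prune (\<lambda>_. None) T" ?x] by simp
          qed
        qed simp
        show "AE T in measure_pmf (P a). real (dt_cost (prune (\<lambda>_. None) T) ?x) \<le> real (dt_cost T ?x)"
          using prune_eval[of "\<lambda>_. None" ?x] by simp
      qed
      also have "\<dots> \<le> val a (P a)" unfolding val_def using finite_qdom xq by (intro Max_ge) auto
      also have "\<dots> < R0_query G (g a) + 1" using Pp[of a] by simp
      also have "R0_query G (g a) \<le> r" unfolding r_def g_def using ab by (rule Max_marg)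
      finally show ?thesis by simp
    qed
    hence "K * measure_pmf.expectation (P' a) (\<lambda>T. real (dt_cost T ?x)) + 2 \<le> K * (r + 1) + 2"
      using Kpos by (simp add: mult_left_mono)
    finally show ?thesis .
  qed
  define c0 where "c0 = Max (insert 0 ((\<lambda>(a, b). measure_pmf.expectation (pair_pmf pA pB)
                  (\<lambda>(rr, s). real (p_cost PP (a, rr) (b, s)))) ` pdom N1 N2 f))"
  have "R0_CC N1 N2 f \<le> c0"
    unfolding R0_CC_def
  proof (rule cInf_lower)
    show "c0 \<in> {c. \<exists>(P :: (bool list \<times> nat, bool list \<times> nat) ptree) (pA :: nat pmf) (pB :: nat pmf).
      (\<forall>r\<in>set_pmf pA. \<forall>s\<in>set_pmf pB. \<forall>(a, b)\<in>pdom N1 N2 f. p_eval P (a, r) (b, s) = the (f a b)) \<and>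
      c = Max (insert 0 ((\<lambda>(a, b). measure_pmf.expectation (pair_pmf pA pB)
                  (\<lambda>(r, s). real (p_cost P (a, r) (b, s)))) ` pdom N1 N2 f))}"
      unfolding c0_def by (intro CollectI exI[of _ PP] exI[of _ pA] exI[of _ pB]) (use corr in auto)
    show "bdd_below {c. \<exists>(P :: (bool list \<times> nat, bool list \<times> nat) ptree) (pA :: nat pmf) (pB :: nat pmf).
      (\<forall>r\<in>set_pmf pA. \<forall>s\<in>set_pmf pB. \<forall>(a, b)\<in>pdom N1 N2 f. p_eval P (a, r) (b, s) = the (f a b)) \<and>
      c = Max (insert 0 ((\<lambda>(a, b). measure_pmf.expectation (pair_pmf pA pB)
                  (\<lambda>(r, s). real (p_cost P (a, r) (b, s)))) ` pdom N1 N2 f))}"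
      using finite_pdom by (intro bdd_belowI[of _ 0]) (auto simp: Max_ge)
  qed
  also have "c0 \<le> K * (r + 1) + 2"
  proof -
    have r0: "0 \<le> r" unfolding r_def using Mar_finite by (simp add: Max_ge)
    show ?thesis unfolding c0_def using finite_pdom expb r0 Kpos
      by (subst Max_le_iff) auto
  qed
  finally show ?thesis unfolding K_def .
qed


definition permU :: "('a \<Rightarrow> 'a) \<Rightarrow> 'a \<Rightarrow> 'a \<Rightarrow> complex" where
  "permU \<sigma> x y = (if x = \<sigma> y then 1 else 0)"

lemma permU_unitary:
  assumes "finite B" "\<And>y. y \<in> B \<Longrightarrow> \<sigma> y \<in> B" "inj_on \<sigma> B"
  shows "unitary_on B (permU \<sigma>)"
  unfolding unitary_on_def
proof (intro ballI)
  fix x y assume xy: "x \<in> B" "y \<in> B"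
  have "(\<Sum>z\<in>B. cnj (permU \<sigma> z x) * permU \<sigma> z y) = (\<Sum>z\<in>B. if z = \<sigma> x then (if \<sigma> x = \<sigma> y then 1 else 0) else 0)"
    unfolding permU_def by (intro sum.cong) auto
  also have "\<dots> = (if \<sigma> x = \<sigma> y then 1 else 0)" using assms(2)[OF xy(1)] assms(1) by simp
  also have "\<dots> = (if x = y then 1 else 0)" using assms(3) xy by (auto dest: inj_onD)
  finally show "(\<Sum>z\<in>B. cnj (permU \<sigma> z x) * permU \<sigma> z y) = (if x = y then 1 else 0)" .
qed

definition delta :: "'a \<Rightarrow> 'a \<Rightarrow> complex" where
  "delta k = (\<lambda>k'. if k' = k then 1 else 0)"

lemma qapply_permU_delta:
  assumes "finite B" "k \<in> B"
  shows "qapply B (permU \<sigma>) (delta k) = delta (\<sigma> k)"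
proof
  fix x
  have "qapply B (permU \<sigma>) (delta k) x = (\<Sum>y\<in>B. if y = k then permU \<sigma> x k else 0)"
    unfolding qapply_def delta_def by (intro sum.cong) auto
  also have "\<dots> = permU \<sigma> x k" using assms by simp
  finally show "qapply B (permU \<sigma>) (delta k) x = delta (\<sigma> k) x" unfolding permU_def delta_def by simp
qed

lemma qoracle_delta:
  "qoracle x (delta (i, c, w)) = delta (i, c \<noteq> (i < length x \<and> x ! i), w)"
  unfolding qoracle_def delta_def by (auto simp: fun_eq_iff)

lemma finite_qbasis: "finite (qbasis n W)"
proof -
  have "qbasis n W \<subseteq> {..n} \<times> UNIV \<times> {..<W}" unfolding qbasis_def by auto
  thus ?thesis by (rule finite_subset) auto
qed

definition swq :: "nat \<Rightarrow> nat \<times> bool \<times> nat \<Rightarrow> nat \<times> bool \<times> nat" where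
  "swq t = (\<lambda>(i, c, w). (if i = t then Suc t else if i = Suc t then t else i,
              if c \<noteq> bit w t then \<not> c else c, if c \<noteq> bit w t then flip_bit t w else w))"

lemma flip_flip: "flip_bit t (flip_bit t (w::nat)) = w" by (rule bit_eqI) (auto simp: bit_flip_bit_iff)
lemma bit_flip_same: "bit (flip_bit t (w::nat)) t = (\<not> bit w t)" by (auto simp: bit_flip_bit_iff)
lemma flip_less: "t < n \<Longrightarrow> (w::nat) < 2^n \<Longrightarrow> flip_bit t w < 2^n"
  by (metis take_bit_flip_bit_eq take_bit_nat_eq_self_iff leD)

lemma swq_invol: "swq t (swq t k) = k"
  by (cases k) (auto simp: swq_def flip_flip bit_flip_same)

lemma swq_in: "t < n \<Longrightarrow> k \<in> qbasis n (2 ^ n) \<Longrightarrow> swq t k \<in> qbasis n (2 ^ n)"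
  by (cases k) (auto simp: swq_def qbasis_def flip_less)

lemma swq_inj: "inj_on (swq t) B"
  by (metis inj_onI swq_invol)

lemma qq_rest_trace:
  assumes "length x = n"
  shows "t0 \<le> n \<Longrightarrow> w < 2 ^ n \<Longrightarrow> (\<forall>j. bit w j = (j < t0 \<and> x ! j)) \<Longrightarrow>
    \<exists>wf. wf < 2 ^ n \<and> (\<forall>j. bit wf j = (j < n \<and> x ! j)) \<and>
      qq_rest (qbasis n (2 ^ n)) x (map (\<lambda>t. permU (swq t)) [t0..<n]) (delta (t0, False, w)) = delta (n, False, wf)"
proof (induction "n - t0" arbitrary: t0 w)
  case 0
  hence "t0 = n" by simp
  then show ?case using 0 by (intro exI[of _ w]) simp
next
  case (Suc d)
  have lt: "t0 < n" using Suc.hyps by simp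
  have ups: "[t0..<n] = t0 # [Suc t0..<n]" using lt by (simp add: upt_conv_Cons)
  define w' where "w' = (if x ! t0 then flip_bit t0 w else w)"
  have bw: "\<not> bit w t0" using Suc.prems(3) by simp
  have o: "qoracle x (delta (t0, False, w)) = delta (t0, x ! t0, w)"
    using qoracle_delta[of x t0 False w] lt assms by simp
  have inB: "(t0, x ! t0, w) \<in> qbasis n (2 ^ n)" using lt Suc.prems unfolding qbasis_def by auto
  have s: "swq t0 (t0, x ! t0, w) = (Suc t0, False, w')"
    unfolding swq_def w'_def using bw by auto
  have ap: "qapply (qbasis n (2 ^ n)) (permU (swq t0)) (qoracle x (delta (t0, False, w))) = delta (Suc t0, False, w')"
    unfolding o using qapply_permU_delta[OF finite_qbasis inB] s by simp
  have w'lt: "w' < 2 ^ n" unfolding w'_def using Suc.prems lt flip_less by auto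
  have w'b: "\<forall>j. bit w' j = (j < Suc t0 \<and> x ! j)"
  proof
    fix j
    show "bit w' j = (j < Suc t0 \<and> x ! j)"
      using Suc.prems(3) unfolding w'_def by (cases "j = t0") (auto simp: bit_flip_bit_iff less_Suc_eq)
  qed
  obtain wf where wf: "wf < 2 ^ n \<and> (\<forall>j. bit wf j = (j < n \<and> x ! j)) \<and>
      qq_rest (qbasis n (2 ^ n)) x (map (\<lambda>t. permU (swq t)) [Suc t0..<n]) (delta (Suc t0, False, w')) = delta (n, False, wf)"
  proof -
    have dd: "d = n - Suc t0" using Suc.hyps(2) by simp
    have "\<exists>wf. wf < 2 ^ n \<and> (\<forall>j. bit wf j = (j < n \<and> x ! j)) \<and>
      qq_rest (qbasis n (2 ^ n)) x (map (\<lambda>t. permU (swq t)) [Suc t0..<n]) (delta (Suc t0, False, w')) = delta (n, False, wf)"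
      using Suc.hyps(1)[OF dd _ w'lt w'b] lt by simp
    then show ?thesis using that by blast
  qed
  show ?case
  proof (rule exI[of _ wf], intro conjI)
    show "wf < 2 ^ n" using wf by blast
    show "\<forall>j. bit wf j = (j < n \<and> x ! j)" using wf by blast
    show "qq_rest (qbasis n (2 ^ n)) x (map (\<lambda>t. permU (swq t)) [t0..<n]) (delta (t0, False, w)) = delta (n, False, wf)"
      unfolding ups using wf ap by simp
  qed
qed

lemma Q_set_nonempty:
  "\<exists>T W U0 Us out. 0 < W \<and> length Us = T \<and> unitary_on (qbasis n W) U0 \<and> (\<forall>U\<in>set Us. unitary_on (qbasis n W) U) \<and>
      (\<forall>x\<in>qdom n g. (\<Sum>k\<in>{k\<in>qbasis n W. out k = the (g x)}. (cmod (qq_final (qbasis n W) x U0 Us k))\<^sup>2) \<ge> 2/3)"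
proof (intro exI conjI)
  let ?B = "qbasis n (2 ^ n)"
  let ?Us = "map (\<lambda>t. permU (swq t)) [0..<n]"
  let ?out = "\<lambda>(i :: nat, c :: bool, w :: nat). (case g (map (bit w) [0..<n]) of Some v \<Rightarrow> v | None \<Rightarrow> False)"
  show "0 < (2::nat) ^ n" by simp
  show "length ?Us = n" by simp
  show "unitary_on ?B (permU id)" by (rule permU_unitary) (auto simp: finite_qbasis)
  show "\<forall>U\<in>set ?Us. unitary_on ?B U"
  proof
    fix U assume "U \<in> set ?Us"
    then obtain t where t: "t < n" "U = permU (swq t)" by auto
    show "unitary_on ?B U" unfolding t(2) by (rule permU_unitary) (auto simp: finite_qbasis swq_in[OF t(1)] swq_inj)
  qed
  show "\<forall>x\<in>qdom n g. (\<Sum>k\<in>{k\<in>?B. ?out k = the (g x)}. (cmod (qq_final ?B x (permU id) ?Us k))\<^sup>2) \<ge> 2/3"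
  proof
    fix x assume x: "x \<in> qdom n g"
    have lx: "length x = n" using x unfolding qdom_def by simp
    obtain v where gv: "g x = Some v" using x unfolding qdom_def by auto
    have z: "(0, False, 0) \<in> ?B" unfolding qbasis_def by simp
    have "(\<lambda>k. if k = (0::nat, False, 0::nat) then 1 else (0::complex)) = delta (0, False, 0)"
      unfolding delta_def by auto
    hence st: "qapply ?B (permU id) (\<lambda>k. if k = (0, False, 0) then 1 else 0) = delta (0, False, 0)"
      using qapply_permU_delta[OF finite_qbasis z, of id] by simp
    obtain wf where wf: "wf < 2 ^ n" "\<forall>j. bit wf j = (j < n \<and> x ! j)"
      "qq_rest ?B x ?Us (delta (0, False, 0)) = delta (n, False, wf)"
      using qq_rest_trace[OF lx, of 0 0] by auto
    have fin: "qq_final ?B x (permU id) ?Us = delta (n, False, wf)"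
      unfolding qq_final_def st using wf(3) .
    have mx: "map (bit wf) [0..<n] = x" using wf(2) lx by (intro nth_equalityI) auto
    have inK: "(n, False, wf) \<in> {k\<in>?B. ?out k = the (g x)}" using wf(1) mx gv unfolding qbasis_def by auto
    have "(\<Sum>k\<in>{k\<in>?B. ?out k = the (g x)}. (cmod (qq_final ?B x (permU id) ?Us k))\<^sup>2)
        = (\<Sum>k\<in>{k\<in>?B. ?out k = the (g x)}. if k = (n, False, wf) then 1 else 0)"
      unfolding fin delta_def by (intro sum.cong) auto
    also have "\<dots> = 1" using inK finite_qbasis by simp
    finally show "(\<Sum>k\<in>{k\<in>?B. ?out k = the (g x)}. (cmod (qq_final ?B x (permU id) ?Us k))\<^sup>2) \<ge> 2/3" by simp
  qed
qed


definition liftS :: "'k set \<Rightarrow> ('k \<Rightarrow> bool list) \<Rightarrow> ('k \<Rightarrow> complex) \<Rightarrow> bool list \<Rightarrow> complex" where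
  "liftS B e \<psi> xs = (if xs \<in> e ` B then \<psi> (inv_into B e xs) else 0)"

definition liftU :: "'k set \<Rightarrow> ('k \<Rightarrow> bool list) \<Rightarrow> ('k \<Rightarrow> 'k \<Rightarrow> complex) \<Rightarrow> bool list \<Rightarrow> bool list \<Rightarrow> complex" where
  "liftU B e U xs ys = (if xs \<in> e ` B \<and> ys \<in> e ` B then U (inv_into B e xs) (inv_into B e ys) else if xs = ys then 1 else 0)"

lemma finite_qbits: "finite (qbits m)"
  unfolding qbits_def by (rule finite_len_bool)

lemma sum_img:
  assumes "finite B" "inj_on e B" "e ` B \<subseteq> qbits m" "\<And>y. y \<in> qbits m \<Longrightarrow> y \<notin> e ` B \<Longrightarrow> F y = 0"
  shows "(\<Sum>y\<in>qbits m. F y) = (\<Sum>k\<in>B. F (e k))"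
proof -
  have "(\<Sum>y\<in>qbits m. F y) = (\<Sum>y\<in>e ` B. F y)"
    by (rule sum.mono_neutral_right[OF finite_qbits assms(3)]) (use assms(4) in auto)
  also have "\<dots> = (\<Sum>k\<in>B. F (e k))" using assms(2) by (rule sum.reindex[unfolded comp_def])
  finally show ?thesis .
qed

lemma liftU_apply:
  assumes "finite B" "inj_on e B" "e ` B \<subseteq> qbits m"
  shows "qapply (qbits m) (liftU B e U) (liftS B e \<psi>) = liftS B e (qapply B U \<psi>)"
proof
  fix x
  have "qapply (qbits m) (liftU B e U) (liftS B e \<psi>) x = (\<Sum>k\<in>B. liftU B e U x (e k) * liftS B e \<psi> (e k))"
    unfolding qapply_def by (rule sum_img[OF assms]) (simp add: liftS_def)
  also have "\<dots> = (\<Sum>k\<in>B. liftU B e U x (e k) * \<psi> k)"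
    using assms(2) by (intro sum.cong) (auto simp: liftS_def)
  also have "\<dots> = liftS B e (qapply B U \<psi>) x"
  proof (cases "x \<in> e ` B")
    case True
    then show ?thesis using assms(2) by (simp add: liftU_def liftS_def qapply_def inv_into_f_f)
  next
    case False
    then show ?thesis unfolding liftU_def liftS_def by (auto intro!: sum.neutral)
  qed
  finally show "qapply (qbits m) (liftU B e U) (liftS B e \<psi>) x = liftS B e (qapply B U \<psi>) x" .
qed

lemma liftU_unitary:
  assumes "finite B" "inj_on e B" "e ` B \<subseteq> qbits m" "unitary_on B U"
  shows "unitary_on (qbits m) (liftU B e U)"
  unfolding unitary_on_def
proof (intro ballI)
  fix x y assume x: "x \<in> qbits m" and y: "y \<in> qbits m"
  let ?I = "e ` B"
  have split: "(\<Sum>z\<in>qbits m. F z) = (\<Sum>z\<in>?I. F z) + (\<Sum>z\<in>qbits m - ?I. F z)" for F :: "bool list \<Rightarrow> complex"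
    using assms(3) finite_qbits by (metis sum.subset_diff add.commute)
  show "(\<Sum>z\<in>qbits m. cnj (liftU B e U z x) * liftU B e U z y) = (if x = y then 1 else 0)"
  proof (cases "x \<in> ?I")
    case xI: True
    show ?thesis
    proof (cases "y \<in> ?I")
      case yI: True
      have "(\<Sum>z\<in>qbits m. cnj (liftU B e U z x) * liftU B e U z y) = (\<Sum>k\<in>B. cnj (liftU B e U (e k) x) * liftU B e U (e k) y)"
        by (rule sum_img[OF assms(1-3)]) (use xI yI in \<open>auto simp: liftU_def\<close>)
      also have "\<dots> = (\<Sum>k\<in>B. cnj (U k (inv_into B e x)) * U k (inv_into B e y))"
        using xI yI assms(2) by (intro sum.cong) (auto simp: liftU_def inv_into_f_f)
      also have "\<dots> = (if inv_into B e x = inv_into B e y then 1 else 0)"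
      proof -
        have "inv_into B e x \<in> B" "inv_into B e y \<in> B" using xI yI by (auto intro: inv_into_into)
        thus ?thesis using assms(4) unfolding unitary_on_def by blast
      qed
      also have "\<dots> = (if x = y then 1 else 0)" using xI yI by (metis f_inv_into_f)
      finally show ?thesis .
    next
      case yI: False
      have "(\<Sum>z\<in>qbits m. cnj (liftU B e U z x) * liftU B e U z y) = 0"
        by (rule sum.neutral) (use xI yI in \<open>auto simp: liftU_def\<close>)
      thus ?thesis using xI yI by auto
    qed
  next
    case xI: False
    show ?thesis
    proof (cases "y \<in> ?I")
      case yI: True
      have "(\<Sum>z\<in>qbits m. cnj (liftU B e U z x) * liftU B e U z y) = 0"
        by (rule sum.neutral) (use xI yI in \<open>auto simp: liftU_def\<close>)
      thus ?thesis using xI yI by auto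
    next
      case yI: False
      have "(\<Sum>z\<in>qbits m. cnj (liftU B e U z x) * liftU B e U z y) = (\<Sum>z\<in>qbits m. if z = x then (if x = y then 1 else 0) else 0)"
        by (intro sum.cong) (use xI yI in \<open>auto simp: liftU_def\<close>)
      also have "\<dots> = (if x = y then 1 else 0)" using x finite_qbits by simp
      finally show ?thesis .
    qed
  qed
qed

lemma qapply_perm_list:
  assumes "\<And>xs. length (\<sigma> xs) = length xs" "\<And>xs. \<sigma> (\<sigma> xs) = xs"
  shows "qapply (qbits m) (permU \<sigma>) \<Psi> = (\<lambda>xs. if length xs = m then \<Psi> (\<sigma> xs) else 0)"
proof
  fix x
  show "qapply (qbits m) (permU \<sigma>) \<Psi> x = (if length x = m then \<Psi> (\<sigma> x) else 0)"
  proof (cases "length x = m")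
    case True
    have "qapply (qbits m) (permU \<sigma>) \<Psi> x = (\<Sum>y\<in>qbits m. if y = \<sigma> x then \<Psi> y else 0)"
      unfolding qapply_def permU_def
    proof (intro sum.cong refl)
      fix y
      have "x = \<sigma> y \<longleftrightarrow> y = \<sigma> x" using assms(2) by metis
      thus "(if x = \<sigma> y then 1 else 0) * \<Psi> y = (if y = \<sigma> x then \<Psi> y else 0)" by simp
    qed
    also have "\<dots> = \<Psi> (\<sigma> x)"
    proof -
      have "\<sigma> x \<in> qbits m" using True assms(1)[of x] by (simp add: qbits_def)
      thus ?thesis using finite_qbits[of m] by (simp add: sum.delta)
    qed
    finally show ?thesis using True by simp
  next
    case False
    have "qapply (qbits m) (permU \<sigma>) \<Psi> x = 0"
      unfolding qapply_def permU_def using False assms(1) by (intro sum.neutral) (auto simp: qbits_def)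
    thus ?thesis using False by simp
  qed
qed

lemma permU_unitary_list:
  assumes "\<And>xs. length (\<sigma> xs) = length xs" "\<And>xs. \<sigma> (\<sigma> xs) = xs"
  shows "unitary_on (qbits m) (permU \<sigma>)"
proof (rule permU_unitary[OF finite_qbits])
  show "inj_on \<sigma> (qbits m)" by (rule inj_onI) (metis assms(2))
qed (auto simp: qbits_def assms)

lemma perm_lift:
  assumes "\<And>xs. length (\<sigma> xs) = length xs" "\<And>xs. \<sigma> (\<sigma> xs) = xs"
    and inj: "inj_on e B" and img: "e ` B \<subseteq> qbits m"
    and tau: "\<And>k. k \<in> B \<Longrightarrow> \<tau> k \<in> B \<and> \<sigma> (e k) = e (\<tau> k)"
  shows "(\<lambda>xs. if length xs = m then liftS B e \<psi> (\<sigma> xs) else 0) = liftS B e (\<lambda>k. \<psi> (\<tau> k))"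
proof
  fix xs
  show "(if length xs = m then liftS B e \<psi> (\<sigma> xs) else 0) = liftS B e (\<lambda>k. \<psi> (\<tau> k)) xs"
  proof (cases "xs \<in> e ` B")
    case True
    then obtain k where k: "k \<in> B" "xs = e k" by auto
    have "length xs = m" using img k by (auto simp: qbits_def)
    moreover have "\<sigma> xs = e (\<tau> k)" "\<tau> k \<in> B" using tau k by auto
    ultimately show ?thesis using k inj unfolding liftS_def by auto
  next
    case False
    have "\<sigma> xs \<notin> e ` B"
    proof
      assume "\<sigma> xs \<in> e ` B"
      then obtain k where k: "k \<in> B" "\<sigma> xs = e k" by auto
      hence "xs = e (\<tau> k)" using tau[OF k(1)] assms(2) by metis
      thus False using False tau k by auto
    qed
    thus ?thesis using False unfolding liftS_def by auto
  qed
qed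

lemma perm_id_lift:
  assumes "inj_on e B" "e ` B \<subseteq> qbits m"
  shows "qapply (qbits m) (permU id) (liftS B e \<psi>) = liftS B e \<psi>"
  using qapply_perm_list[of id m] perm_lift[of id e B m "\<lambda>k. k" \<psi>] assms by simp

definition tog :: "(bool list \<Rightarrow> bool) \<Rightarrow> nat \<Rightarrow> bool list \<Rightarrow> bool list" where
  "tog C p xs = (if C xs then xs[p := \<not> xs ! p] else xs)"

lemma tog_length[simp]: "length (tog C p xs) = length xs"
  unfolding tog_def by simp

lemma tog_invol:
  assumes "\<And>xs v. C (xs[p := v]) = C xs"
  shows "tog C p (tog C p xs) = xs"
  unfolding tog_def using assms by (cases "p < length xs") (auto simp: list_update_beyond)

lemma tog_nth: "p < length xs \<Longrightarrow> tog C p xs ! j = (if C xs \<and> j = p then \<not> xs ! p else xs ! j)"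
  unfolding tog_def by auto

lemma local_all: "local_on m {j. j < m} U"
  unfolding local_on_def qbits_def
  by (auto intro!: arg_cong2[where f=U] nth_equalityI)

lemma local_tog:
  assumes pS: "p \<in> S" and pm: "p < m"
    and dep: "\<And>xs ys. xs \<in> qbits m \<Longrightarrow> ys \<in> qbits m \<Longrightarrow> (\<forall>j<m. j \<in> S \<longrightarrow> xs ! j = ys ! j) \<Longrightarrow> C xs = C ys"
  shows "local_on m S (permU (tog C p))"
  unfolding local_on_def
proof (intro conjI ballI impI)
  fix x y assume x: "x \<in> qbits m" and y: "y \<in> qbits m" and d: "\<exists>j<m. j \<notin> S \<and> x ! j \<noteq> y ! j"
  then obtain j where j: "j < m" "j \<notin> S" "x ! j \<noteq> y ! j" by auto
  have "x \<noteq> tog C p y"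
  proof
    assume "x = tog C p y"
    moreover have jp: "j \<noteq> p" using j(2) pS by auto
    moreover have "tog C p y ! j = y ! j" using tog_nth[of p y C j] pm y jp by (simp add: qbits_def)
    ultimately have "x ! j = y ! j" by simp
    thus False using j by simp
  qed
  thus "permU (tog C p) x y = 0" unfolding permU_def by simp
next
  fix x y x' y' assume x: "x \<in> qbits m" and y: "y \<in> qbits m" and x': "x' \<in> qbits m" and y': "y' \<in> qbits m"
    and H: "(\<forall>j<m. j \<notin> S \<longrightarrow> x ! j = y ! j \<and> x' ! j = y' ! j) \<and> (\<forall>j<m. j \<in> S \<longrightarrow> x ! j = x' ! j \<and> y ! j = y' ! j)"
  have Cy: "C y = C y'" using dep[OF y y'] H by auto
  have eq1: "(x = tog C p y) \<longleftrightarrow> (\<forall>j<m. j \<in> S \<longrightarrow> x ! j = (if C y \<and> j = p then \<not> y ! p else y ! j))"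
  proof -
    have "(x = tog C p y) \<longleftrightarrow> (\<forall>j<m. x ! j = tog C p y ! j)"
      using x y by (auto simp: qbits_def list_eq_iff_nth_eq)
    also have "\<dots> \<longleftrightarrow> (\<forall>j<m. j \<in> S \<longrightarrow> x ! j = (if C y \<and> j = p then \<not> y ! p else y ! j))"
      using H pS pm y by (auto simp: tog_nth qbits_def)
    finally show ?thesis .
  qed
  have eq2: "(x' = tog C p y') \<longleftrightarrow> (\<forall>j<m. j \<in> S \<longrightarrow> x' ! j = (if C y' \<and> j = p then \<not> y' ! p else y' ! j))"
  proof -
    have "(x' = tog C p y') \<longleftrightarrow> (\<forall>j<m. x' ! j = tog C p y' ! j)"
      using x' y' by (auto simp: qbits_def list_eq_iff_nth_eq)
    also have "\<dots> \<longleftrightarrow> (\<forall>j<m. j \<in> S \<longrightarrow> x' ! j = (if C y' \<and> j = p then \<not> y' ! p else y' ! j))"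
      using H pS pm y' by (auto simp: tog_nth qbits_def)
    finally show ?thesis .
  qed
  have "(x = tog C p y) \<longleftrightarrow> (x' = tog C p y')"
    unfolding eq1 eq2 using H Cy pS pm by auto
  thus "permU (tog C p) x y = permU (tog C p) x' y'" unfolding permU_def by simp
qed


fun enc :: "nat \<Rightarrow> nat \<Rightarrow> bool list" where
  "enc 0 v = []"
| "enc (Suc l) v = odd v # enc l (v div 2)"

lemma enc_length[simp]: "length (enc l v) = l"
  by (induction l arbitrary: v) auto

lemma enc_inj: "v < 2 ^ l \<Longrightarrow> v' < 2 ^ l \<Longrightarrow> enc l v = enc l v' \<Longrightarrow> v = v'"
proof (induction l arbitrary: v v')
  case 0 then show ?case by simp
next
  case (Suc l)
  have "v div 2 = v' div 2" using Suc by (intro Suc.IH) auto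
  moreover have "odd v = odd v'" using Suc.prems by simp
  ultimately show ?case by (metis div_mult_mod_eq odd_iff_mod_2_eq_one mod2_eq_if)
qed

lemma enc_zero: "enc l 0 = replicate l False"
  by (induction l) auto

definition embp :: "nat \<Rightarrow> nat \<Rightarrow> nat \<times> bool \<times> nat \<Rightarrow> bool list" where
  "embp lI kW = (\<lambda>(i, c, w). False # enc lI i @ c # enc kW w)"

definition emb :: "nat \<Rightarrow> nat \<Rightarrow> nat \<times> bool \<times> nat \<Rightarrow> bool list" where
  "emb lI kW k = embp lI kW k @ [False]"

lemma embp_length[simp]: "length (embp lI kW k) = lI + kW + 2"
  by (cases k) (simp add: embp_def)

lemma emb_length[simp]: "length (emb lI kW k) = lI + kW + 3"
  by (simp add: emb_def)

lemma embp_inj: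
  assumes "G < 2 ^ lI" "W \<le> 2 ^ kW"
  shows "inj_on (embp lI kW) (qbasis G W)"
proof (rule inj_onI)
  fix k k' assume k: "k \<in> qbasis G W" and k': "k' \<in> qbasis G W" and eq: "embp lI kW k = embp lI kW k'"
  obtain i c w where kk: "k = (i, c, w)" by (cases k) auto
  obtain i' c' w' where kk': "k' = (i', c', w')" by (cases k') auto
  have r: "i < 2 ^ lI" "i' < 2 ^ lI" "w < 2 ^ kW" "w' < 2 ^ kW"
    using k k' kk kk' assms unfolding qbasis_def by auto
  have "enc lI i @ c # enc kW w = enc lI i' @ c' # enc kW w'" using eq kk kk' by (simp add: embp_def)
  hence "enc lI i = enc lI i' \<and> c # enc kW w = c' # enc kW w'" by (simp add: append_eq_append_conv)
  hence "i = i'" "c = c'" "w = w'" using enc_inj r by auto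
  thus "k = k'" using kk kk' by simp
qed

lemma emb_inj:
  assumes "G < 2 ^ lI" "W \<le> 2 ^ kW"
  shows "inj_on (emb lI kW) (qbasis G W)"
  using embp_inj[OF assms] unfolding emb_def inj_on_def by simp

lemma emb_img: "emb lI kW ` B \<subseteq> qbits (lI + kW + 3)"
  by (auto simp: qbits_def)

definition sF :: "bool list \<Rightarrow> bool list" where "sF = tog (\<lambda>_. True) 0"

definition sO :: "nat \<Rightarrow> nat \<Rightarrow> bool list \<Rightarrow> bool list \<Rightarrow> bool list" where
  "sO lI G x = tog (\<lambda>xs. xs ! 0 \<and> (\<exists>i<G. take lI (drop 1 xs) = enc lI i \<and> x ! i)) (Suc lI)"

definition sC :: "'k set \<Rightarrow> ('k \<Rightarrow> bool list) \<Rightarrow> ('k \<Rightarrow> bool) \<Rightarrow> nat \<Rightarrow> bool list \<Rightarrow> bool list" where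
  "sC B e out p = tog (\<lambda>xs. \<exists>k\<in>B. take p xs = take p (e k) \<and> out k) p"

lemma sF_invol: "sF (sF xs) = xs" unfolding sF_def by (rule tog_invol) simp
lemma sF_len[simp]: "length (sF xs) = length xs" unfolding sF_def by simp

lemma take_drop_upd: "take lI (drop (Suc 0) (xs[Suc lI := v])) = take lI (drop (Suc 0) xs)"
  by (cases xs) (auto simp: take_update_cancel)

lemma sO_invol: "sO lI G x (sO lI G x xs) = xs"
  unfolding sO_def by (rule tog_invol) (simp add: take_drop_upd)
lemma sO_len[simp]: "length (sO lI G x xs) = length xs" unfolding sO_def by simp

lemma sC_invol: "sC B e out p (sC B e out p xs) = xs"
  unfolding sC_def by (rule tog_invol) (simp add: take_update_cancel)
lemma sC_len[simp]: "length (sC B e out p xs) = length xs" unfolding sC_def by simp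

lemma sF_emb: "sF (emb lI kW (i, c, w)) = True # enc lI i @ c # enc kW w @ [False]"
  unfolding sF_def tog_def emb_def embp_def by simp

lemma sF_true: "sF (True # R) = False # R"
  unfolding sF_def tog_def by simp

lemma sO_eff:
  assumes "i < 2 ^ lI" "G \<le> 2 ^ lI"
  shows "sO lI G x (True # enc lI i @ c # R) = True # enc lI i @ (c \<noteq> (i < G \<and> x ! i)) # R"
proof -
  have C: "(\<exists>i'<G. take lI (drop 1 (True # enc lI i @ c # R)) = enc lI i' \<and> x ! i') \<longleftrightarrow> (i < G \<and> x ! i)"
  proof
    assume "\<exists>i'<G. take lI (drop 1 (True # enc lI i @ c # R)) = enc lI i' \<and> x ! i'"
    then obtain i' where "i' < G" "enc lI i = enc lI i'" "x ! i'" by auto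
    moreover hence "i = i'" using assms by (intro enc_inj) auto
    ultimately show "i < G \<and> x ! i" by simp
  qed auto
  have u: "(True # enc lI i @ c # R)[Suc lI := v] = True # enc lI i @ v # R" for v
    using list_update_length[of "enc lI i" c R v] by simp
  have n: "(True # enc lI i @ c # R) ! Suc lI = c"
    using nth_append_length[of "enc lI i" c R] by simp
  show ?thesis unfolding sO_def tog_def using C u n by auto
qed

lemma sO_flag0: "sO lI G x (emb lI kW k) = emb lI kW k"
  unfolding sO_def tog_def emb_def embp_def by (cases k) auto

lemma sC_emb:
  assumes inj: "inj_on (embp lI kW) B" and k: "k \<in> B"
  shows "sC B (emb lI kW) out (lI + kW + 2) (emb lI kW k) = embp lI kW k @ [out k]"
proof -
  have tk: "take (lI + kW + 2) (emb lI kW k') = embp lI kW k'" for k'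
    unfolding emb_def using embp_length[of lI kW k'] by simp
  have C: "(\<exists>k'\<in>B. take (lI + kW + 2) (emb lI kW k) = take (lI + kW + 2) (emb lI kW k') \<and> out k') \<longleftrightarrow> out k"
    unfolding tk using inj k by (auto dest: inj_onD)
  have u: "(emb lI kW k)[lI + kW + 2 := v] = embp lI kW k @ [v]" for v
    unfolding emb_def using list_update_length[of "embp lI kW k" False "[]" v] by simp
  have n: "emb lI kW k ! (lI + kW + 2) = False"
    unfolding emb_def using nth_append_length[of "embp lI kW k" False "[]"] by simp
  show ?thesis unfolding sC_def tog_def using C u n by (cases "out k") (auto simp: emb_def)
qed


lemma oracle_lift:
  assumes GlI: "G < 2 ^ lI" and WkW: "W \<le> 2 ^ kW" and lx: "length x = G"
  shows "qapply (qbits (lI + kW + 3)) (permU sF) (qapply (qbits (lI + kW + 3)) (permU (sO lI G x))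
           (qapply (qbits (lI + kW + 3)) (permU sF) (liftS (qbasis G W) (emb lI kW) \<psi>)))
         = liftS (qbasis G W) (emb lI kW) (qoracle x \<psi>)"
proof -
  let ?m = "lI + kW + 3"
  let ?B = "qbasis G W"
  let ?\<sigma> = "\<lambda>xs. sF (sO lI G x (sF xs))"
  let ?\<tau> = "\<lambda>(i :: nat, c :: bool, w :: nat). (i, c \<noteq> (i < G \<and> x ! i), w)"
  have "qapply (qbits ?m) (permU sF) (qapply (qbits ?m) (permU (sO lI G x))
           (qapply (qbits ?m) (permU sF) (liftS ?B (emb lI kW) \<psi>)))
        = (\<lambda>xs. if length xs = ?m then liftS ?B (emb lI kW) \<psi> (?\<sigma> xs) else 0)"
    unfolding qapply_perm_list[OF sF_len sF_invol] qapply_perm_list[OF sO_len sO_invol] by (simp cong: if_cong)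
  also have "\<dots> = liftS ?B (emb lI kW) (\<lambda>k. \<psi> (?\<tau> k))"
  proof (rule perm_lift)
    show "length (?\<sigma> xs) = length xs" for xs by simp
    show "?\<sigma> (?\<sigma> xs) = xs" for xs by (simp add: sF_invol sO_invol)
    show "inj_on (emb lI kW) ?B" by (rule emb_inj[OF GlI WkW])
    show "emb lI kW ` ?B \<subseteq> qbits ?m" by (rule emb_img)
    fix k assume k: "k \<in> ?B"
    obtain i c w where kk: "k = (i, c, w)" by (cases k) auto
    have i: "i < 2 ^ lI" using k kk GlI unfolding qbasis_def by auto
    have "?\<sigma> (emb lI kW k) = sF (sO lI G x (True # enc lI i @ c # enc kW w @ [False]))"
      unfolding kk sF_emb by simp
    also have "\<dots> = sF (True # enc lI i @ (c \<noteq> (i < G \<and> x ! i)) # enc kW w @ [False])"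
      by (subst sO_eff[OF i less_imp_le[OF GlI]]) (rule refl)
    also have "\<dots> = emb lI kW (?\<tau> k)"
      unfolding kk sF_true by (simp add: emb_def embp_def)
    finally show "?\<tau> k \<in> ?B \<and> ?\<sigma> (emb lI kW k) = emb lI kW (?\<tau> k)"
      using k kk unfolding qbasis_def by simp
  qed
  also have "(\<lambda>k. \<psi> (?\<tau> k)) = qoracle x \<psi>"
    unfolding qoracle_def using lx by auto
  finally show ?thesis .
qed

lemma flag0_lift:
  assumes GlI: "G < 2 ^ lI" and WkW: "W \<le> 2 ^ kW"
  shows "qapply (qbits (lI + kW + 3)) (permU id) (qapply (qbits (lI + kW + 3)) (permU (sO lI G x))
           (qapply (qbits (lI + kW + 3)) (permU id) (liftS (qbasis G W) (emb lI kW) \<psi>)))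
         = liftS (qbasis G W) (emb lI kW) \<psi>"
proof -
  have inj: "inj_on (emb lI kW) (qbasis G W)" by (rule emb_inj[OF GlI WkW])
  have o: "qapply (qbits (lI + kW + 3)) (permU (sO lI G x)) (liftS (qbasis G W) (emb lI kW) \<psi>) = liftS (qbasis G W) (emb lI kW) \<psi>"
  proof -
    have "qapply (qbits (lI + kW + 3)) (permU (sO lI G x)) (liftS (qbasis G W) (emb lI kW) \<psi>)
       = (\<lambda>xs. if length xs = lI + kW + 3 then liftS (qbasis G W) (emb lI kW) \<psi> (sO lI G x xs) else 0)"
      by (rule qapply_perm_list[OF sO_len sO_invol])
    also have "\<dots> = liftS (qbasis G W) (emb lI kW) (\<lambda>k. \<psi> k)"
      by (rule perm_lift[OF sO_len sO_invol inj emb_img]) (simp add: sO_flag0)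
    finally show ?thesis by simp
  qed
  show ?thesis using perm_id_lift[OF inj emb_img] o by simp
qed

lemma qcc_run_append: "qcc_run m (xs @ ys) a b \<psi> = qcc_run m ys a b (qcc_run m xs a b \<psi>)"
  by (induction m xs a b \<psi> rule: qcc_run.induct) auto

fun preS :: "(nat \<times> bool \<times> nat) set \<Rightarrow> bool list \<Rightarrow> (nat \<times> bool \<times> nat \<Rightarrow> nat \<times> bool \<times> nat \<Rightarrow> complex) list \<Rightarrow> nat \<Rightarrow> (nat \<times> bool \<times> nat \<Rightarrow> complex)" where
  "preS B x Ua 0 = delta (0, False, 0)"
| "preS B x Ua (Suc t) = (if Suc t < length Ua then qoracle x (qapply B (Ua ! t) (preS B x Ua t))
      else if Suc t = length Ua then qapply B (Ua ! t) (preS B x Ua t) else preS B x Ua t)"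

lemma preS_qq:
  "t < length (U0 # Us) \<Longrightarrow> qq_rest B x (drop t Us) (qapply B ((U0 # Us) ! t) (preS B x (U0 # Us) t)) = qq_final B x U0 Us"
proof (induction t)
  case 0
  show ?case unfolding qq_final_def by (simp add: delta_def)
next
  case (Suc t)
  have d: "drop t Us = Us ! t # drop (Suc t) Us" using Suc.prems by (simp add: Cons_nth_drop_Suc)
  have "qq_rest B x (drop (Suc t) Us) (qapply B ((U0 # Us) ! Suc t) (preS B x (U0 # Us) (Suc t)))
      = qq_rest B x (drop t Us) (qapply B ((U0 # Us) ! t) (preS B x (U0 # Us) t))"
  proof -
    have p: "preS B x (U0 # Us) (Suc t) = qoracle x (qapply B ((U0 # Us) ! t) (preS B x (U0 # Us) t))"
      using Suc.prems by simp
    have "qq_rest B x (drop t Us) (qapply B ((U0 # Us) ! t) (preS B x (U0 # Us) t))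
        = qq_rest B x (drop (Suc t) Us) (qapply B (Us ! t) (qoracle x (qapply B ((U0 # Us) ! t) (preS B x (U0 # Us) t))))"
      unfolding d by (simp only: qq_rest.simps)
    thus ?thesis unfolding p by simp
  qed
  also have "\<dots> = qq_final B x U0 Us" using Suc.IH Suc.prems by simp
  finally show ?case .
qed

lemma preS_stable: "length Ua \<le> t \<Longrightarrow> preS B x Ua t = preS B x Ua (length Ua)"
proof (induction t)
  case 0 then show ?case by simp
next
  case (Suc t)
  show ?case
  proof (cases "length Ua = Suc t")
    case True then show ?thesis by simp
  next
    case False
    hence le: "length Ua \<le> t" using Suc.prems by simp
    have "preS B x Ua (Suc t) = preS B x Ua t" using le by (simp del: preS.simps add: preS.simps(2))
    thus ?thesis using Suc.IH[OF le] by simp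
  qed
qed


locale qprot =
  fixes G lI kW Tm :: nat
    and Wf :: "bool list \<Rightarrow> nat"
    and U0f :: "bool list \<Rightarrow> (nat \<times> bool \<times> nat \<Rightarrow> nat \<times> bool \<times> nat \<Rightarrow> complex)"
    and Usf :: "bool list \<Rightarrow> (nat \<times> bool \<times> nat \<Rightarrow> nat \<times> bool \<times> nat \<Rightarrow> complex) list"
    and outf :: "bool list \<Rightarrow> nat \<times> bool \<times> nat \<Rightarrow> bool"
    and \<phi> :: "bool list \<Rightarrow> bool list"
  assumes GlI: "G < 2 ^ lI" and Wpos: "\<And>a. 0 < Wf a" and WkW: "\<And>a. Wf a \<le> 2 ^ kW"
    and U0u: "\<And>a. unitary_on (qbasis G (Wf a)) (U0f a)"
    and Usu: "\<And>a U. U \<in> set (Usf a) \<Longrightarrow> unitary_on (qbasis G (Wf a)) U"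
    and TTm: "\<And>a. length (Usf a) \<le> Tm"
begin

definition "mm = lI + kW + 3"
definition "Bq a = qbasis G (Wf a)"
definition "SS = {..<Suc (Suc lI)}"
definition AU :: "nat \<Rightarrow> bool list \<Rightarrow> bool list \<Rightarrow> bool list \<Rightarrow> complex" where
  "AU t a = (if t \<le> length (Usf a) then liftU (Bq a) (emb lI kW) ((U0f a # Usf a) ! t) else permU id)"
definition FU :: "nat \<Rightarrow> bool list \<Rightarrow> bool list \<Rightarrow> bool list \<Rightarrow> complex" where
  "FU t a = (if t < length (Usf a) then permU sF else permU id)"
definition OU :: "bool list \<Rightarrow> bool list \<Rightarrow> bool list \<Rightarrow> complex" where
  "OU b = permU (sO lI G (\<phi> b))"
definition CU :: "bool list \<Rightarrow> bool list \<Rightarrow> bool list \<Rightarrow> complex" where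
  "CU a = permU (sC (Bq a) (emb lI kW) (outf a) (lI + kW + 2))"
definition rnd :: "nat \<Rightarrow> qround list" where
  "rnd t = [(True, AU t, {}), (True, FU t, SS), (False, OU, SS), (True, FU t, {})]"
definition prot :: "qround list" where
  "prot = concat (map rnd [0..<Tm]) @ [(True, AU Tm, {}), (True, CU, {})]"

lemma inj_e: "inj_on (emb lI kW) (Bq a)" unfolding Bq_def by (rule emb_inj[OF GlI WkW])
lemma img_e: "emb lI kW ` (Bq a) \<subseteq> qbits mm" unfolding mm_def by (rule emb_img)
lemma fin_B: "finite (Bq a)" unfolding Bq_def by (rule finite_qbasis)

lemma AU_unitary: "unitary_on (qbits mm) (AU t a)"
proof (cases "t \<le> length (Usf a)")
  case True
  have "unitary_on (Bq a) ((U0f a # Usf a) ! t)"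
  proof (cases t)
    case 0 then show ?thesis using U0u unfolding Bq_def by simp
  next
    case (Suc t')
    hence "Usf a ! t' \<in> set (Usf a)" using True by simp
    then show ?thesis using Usu Suc unfolding Bq_def by simp
  qed
  then show ?thesis using True unfolding AU_def by (simp add: liftU_unitary[OF fin_B inj_e img_e])
next
  case False
  then show ?thesis unfolding AU_def by (simp add: permU_unitary_list)
qed

lemma FU_unitary: "unitary_on (qbits mm) (FU t a)"
  unfolding FU_def using permU_unitary_list[of sF, OF sF_len sF_invol] permU_unitary_list[of id] by simp

lemma OU_unitary: "unitary_on (qbits mm) (OU b)"
  unfolding OU_def by (rule permU_unitary_list[OF sO_len sO_invol])

lemma CU_unitary: "unitary_on (qbits mm) (CU a)"
  unfolding CU_def by (rule permU_unitary_list[OF sC_len sC_invol])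

lemma SS_sub: "SS \<subseteq> {j. j < mm}" unfolding SS_def mm_def by auto

lemma OU_local: "local_on mm SS (OU b)"
  unfolding OU_def sO_def
proof (rule local_tog)
  show "Suc lI \<in> SS" unfolding SS_def by simp
  show "Suc lI < mm" unfolding mm_def by simp
  fix xs ys assume xs: "xs \<in> qbits mm" and ys: "ys \<in> qbits mm" and H: "\<forall>j<mm. j \<in> SS \<longrightarrow> xs ! j = ys ! j"
  have 0: "xs ! 0 = ys ! 0" using H unfolding SS_def mm_def by auto
  have "take lI (drop 1 xs) = take lI (drop 1 ys)"
  proof (rule nth_equalityI)
    show "length (take lI (drop 1 xs)) = length (take lI (drop 1 ys))" using xs ys by (simp add: qbits_def)
    fix j assume "j < length (take lI (drop 1 xs))"
    hence j: "j < lI" "Suc j < mm" using xs unfolding qbits_def mm_def by auto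
    have "xs ! Suc j = ys ! Suc j" using H j unfolding SS_def by auto
    thus "take lI (drop 1 xs) ! j = take lI (drop 1 ys) ! j" using j xs ys by (simp add: qbits_def mm_def)
  qed
  thus "(xs ! 0 \<and> (\<exists>i<G. take lI (drop 1 xs) = enc lI i \<and> \<phi> b ! i)) = (ys ! 0 \<and> (\<exists>i<G. take lI (drop 1 ys) = enc lI i \<and> \<phi> b ! i))"
    using 0 by simp
qed


lemma OU_local': "local_on mm {j. j < mm \<and> j \<in> SS} (OU b)"
proof -
  have "{j. j < mm \<and> j \<in> SS} = SS" using SS_sub by auto
  thus ?thesis using OU_local by simp
qed

lemma FU_local': "local_on mm {j. j \<notin> SS \<longrightarrow> j < mm} U"
proof -
  have "{j. j \<notin> SS \<longrightarrow> j < mm} = {j. j < mm}" using SS_sub by auto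
  thus ?thesis using local_all by simp
qed

lemma valid_rnd:
  assumes "qcc_valid N1 N2 mm (\<lambda>_. True) rest"
  shows "qcc_valid N1 N2 mm (\<lambda>_. True) (rnd t @ rest)"
  unfolding rnd_def
  apply (simp only: append_Cons append_Nil qcc_valid.simps)
  using assms SS_sub by (simp add: AU_unitary FU_unitary OU_unitary local_all OU_local' OU_local FU_local' subset_iff)


lemma valid_prot: "qcc_valid N1 N2 mm (\<lambda>_. True) prot"
proof -
  have fin: "qcc_valid N1 N2 mm (\<lambda>_. True) [(True, AU Tm, {}), (True, CU, {})]"
    by (simp add: AU_unitary CU_unitary local_all)
  have "qcc_valid N1 N2 mm (\<lambda>_. True) (concat (map rnd ts) @ [(True, AU Tm, {}), (True, CU, {})])" for ts
  proof (induction ts)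
    case Nil then show ?case using fin by simp
  next
    case (Cons t ts)
    then show ?case using valid_rnd by simp
  qed
  thus ?thesis unfolding prot_def .
qed

lemma cost_prot: "qcc_cost prot = Tm * (2 * (lI + 2))"
proof -
  have "qcc_cost (concat (map rnd ts) @ [(True, AU Tm, {}), (True, CU, {})]) = length ts * (2 * (lI + 2))" for ts
    by (induction ts) (auto simp: qcc_cost_def rnd_def SS_def)
  thus ?thesis unfolding prot_def by simp
qed


lemma run_rnd:
  assumes lx: "length (\<phi> b) = G"
  shows "qcc_run mm (rnd t) a b (liftS (Bq a) (emb lI kW) (preS (Bq a) (\<phi> b) (U0f a # Usf a) t))
       = liftS (Bq a) (emb lI kW) (preS (Bq a) (\<phi> b) (U0f a # Usf a) (Suc t))"
proof -
  define B where "B = Bq a"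
  define e where "e = emb lI kW"
  define x where "x = \<phi> b"
  define Ua where "Ua = U0f a # Usf a"
  define \<psi> where "\<psi> = preS B x Ua t"
  have run: "qcc_run mm (rnd t) a b \<Psi> = qapply (qbits mm) (FU t a) (qapply (qbits mm) (OU b)
       (qapply (qbits mm) (FU t a) (qapply (qbits mm) (AU t a) \<Psi>)))" for \<Psi>
    by (simp add: rnd_def)
  have Bd: "B = qbasis G (Wf a)" unfolding B_def Bq_def ..
  have lUa: "length Ua = Suc (length (Usf a))" unfolding Ua_def by simp
  have ps: "preS B x Ua (Suc t) = (if Suc t < length Ua then qoracle x (qapply B (Ua ! t) (preS B x Ua t))
      else if Suc t = length Ua then qapply B (Ua ! t) (preS B x Ua t) else preS B x Ua t)"
    by (rule preS.simps(2))
  show ?thesis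
  proof (cases "t < length (Usf a)")
    case True
    have "qcc_run mm (rnd t) a b (liftS B e \<psi>) = qapply (qbits mm) (permU sF) (qapply (qbits mm) (permU (sO lI G x))
       (qapply (qbits mm) (permU sF) (liftS B e (qapply B (Ua ! t) \<psi>))))"
      unfolding run using True
      by (simp add: AU_def FU_def OU_def x_def Ua_def B_def e_def liftU_apply[OF fin_B inj_e img_e])
    also have "\<dots> = liftS B e (qoracle x (qapply B (Ua ! t) \<psi>))"
      unfolding mm_def Bd e_def by (rule oracle_lift[OF GlI WkW]) (simp add: x_def lx)
    also have "qoracle x (qapply B (Ua ! t) \<psi>) = preS B x Ua (Suc t)"
      unfolding ps \<psi>_def using True lUa by simp
    finally show ?thesis unfolding B_def e_def x_def Ua_def \<psi>_def .
  next
    case False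
    show ?thesis
    proof (cases "t = length (Usf a)")
      case True
      have "qcc_run mm (rnd t) a b (liftS B e \<psi>) = qapply (qbits mm) (permU id) (qapply (qbits mm) (permU (sO lI G x))
         (qapply (qbits mm) (permU id) (liftS B e (qapply B (Ua ! t) \<psi>))))"
        unfolding run using True
        by (simp add: AU_def FU_def OU_def x_def Ua_def B_def e_def liftU_apply[OF fin_B inj_e img_e])
      also have "\<dots> = liftS B e (qapply B (Ua ! t) \<psi>)"
        unfolding mm_def Bd e_def by (rule flag0_lift[OF GlI WkW])
      also have "qapply B (Ua ! t) \<psi> = preS B x Ua (Suc t)"
        unfolding ps \<psi>_def using True lUa by simp
      finally show ?thesis unfolding B_def e_def x_def Ua_def \<psi>_def .
    next
      case False2: False
      have "qcc_run mm (rnd t) a b (liftS B e \<psi>) = qapply (qbits mm) (permU id) (qapply (qbits mm) (permU (sO lI G x))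
         (qapply (qbits mm) (permU id) (qapply (qbits mm) (permU id) (liftS B e \<psi>))))"
        unfolding run using False False2
        by (simp add: AU_def FU_def OU_def x_def)
      also have "qapply (qbits mm) (permU id) (liftS B e \<psi>) = liftS B e \<psi>"
        unfolding B_def e_def by (rule perm_id_lift[OF inj_e img_e])
      also have "qapply (qbits mm) (permU id) (qapply (qbits mm) (permU (sO lI G x))
         (qapply (qbits mm) (permU id) (liftS B e \<psi>))) = liftS B e \<psi>"
        unfolding mm_def Bd e_def by (rule flag0_lift[OF GlI WkW])
      finally have main: "qcc_run mm (rnd t) a b (liftS B e \<psi>) = liftS B e \<psi>" .
      have eq: "preS B x Ua (Suc t) = \<psi>"
        unfolding ps \<psi>_def using False False2 lUa by simp
      have "qcc_run mm (rnd t) a b (liftS B e \<psi>) = liftS B e (preS B x Ua (Suc t))"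
        by (simp only: eq main)
      thus ?thesis unfolding B_def e_def x_def Ua_def \<psi>_def .
    qed
  qed
qed


lemma run_loop:
  assumes lx: "length (\<phi> b) = G"
  shows "qcc_run mm (concat (map rnd [0..<t])) a b (liftS (Bq a) (emb lI kW) (preS (Bq a) (\<phi> b) (U0f a # Usf a) 0))
       = liftS (Bq a) (emb lI kW) (preS (Bq a) (\<phi> b) (U0f a # Usf a) t)"
proof (induction t)
  case 0 then show ?case by simp
next
  case (Suc t)
  have "concat (map rnd [0..<Suc t]) = concat (map rnd [0..<t]) @ rnd t" by simp
  then show ?case using Suc run_rnd[OF lx] by (simp only: qcc_run_append)
qed

lemma emb_zero: "emb lI kW (0, False, 0) = replicate mm False"
  by (rule replicate_eqI) (auto simp: emb_def embp_def enc_zero mm_def)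

lemma init_lift:
  "(\<lambda>xs. if xs = replicate mm False then 1 else 0) = liftS (Bq a) (emb lI kW) (preS (Bq a) x Ua 0)"
proof
  fix xs
  have z: "(0, False, 0) \<in> Bq a" unfolding Bq_def qbasis_def using Wpos by simp
  show "(if xs = replicate mm False then 1 else 0) = liftS (Bq a) (emb lI kW) (preS (Bq a) x Ua 0) xs"
  proof (cases "xs \<in> emb lI kW ` Bq a")
    case True
    then obtain k where k: "k \<in> Bq a" "xs = emb lI kW k" by auto
    have "xs = replicate mm False \<longleftrightarrow> k = (0, False, 0)"
      using k z inj_e unfolding emb_zero[symmetric] by (auto dest: inj_onD)
    thus ?thesis using k inj_e by (simp add: liftS_def delta_def)
  next
    case False
    hence "xs \<noteq> replicate mm False" using z emb_zero by force
    thus ?thesis using False by (simp add: liftS_def)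
  qed
qed

lemma final_AU:
  "qapply (qbits mm) (AU Tm a) (liftS (Bq a) (emb lI kW) (preS (Bq a) x (U0f a # Usf a) Tm))
     = liftS (Bq a) (emb lI kW) (qq_final (Bq a) x (U0f a) (Usf a))"
proof -
  define T where "T = length (Usf a)"
  define Ua where "Ua = U0f a # Usf a"
  have TT: "T \<le> Tm" unfolding T_def by (rule TTm)
  have qqf: "qq_final (Bq a) x (U0f a) (Usf a) = qapply (Bq a) (Ua ! T) (preS (Bq a) x Ua T)"
    using preS_qq[of T "U0f a" "Usf a" "Bq a" x] unfolding T_def Ua_def by simp
  show ?thesis
  proof (cases "T = Tm")
    case True
    then show ?thesis unfolding AU_def qqf using liftU_apply[OF fin_B inj_e img_e]
      by (simp add: T_def Ua_def)
  next
    case False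
    hence lt: "T < Tm" using TT by simp
    have "preS (Bq a) x Ua Tm = preS (Bq a) x Ua (length Ua)"
      by (rule preS_stable) (use lt in \<open>simp add: Ua_def T_def\<close>)
    also have "length Ua = Suc T" unfolding Ua_def T_def by simp
    also have "preS (Bq a) x Ua (Suc T) = qapply (Bq a) (Ua ! T) (preS (Bq a) x Ua T)"
      using preS.simps(2)[of "Bq a" x Ua T] unfolding Ua_def T_def by simp
    finally have eq: "preS (Bq a) x Ua Tm = qq_final (Bq a) x (U0f a) (Usf a)" using qqf by simp
    have "AU Tm a = permU id" unfolding AU_def using lt T_def by simp
    thus ?thesis using eq perm_id_lift[OF inj_e img_e] unfolding Ua_def by simp
  qed
qed


lemma full_run:
  assumes lx: "length (\<phi> b) = G"
  shows "qcc_run mm prot a b (\<lambda>xs. if xs = replicate mm False then 1 else 0)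
     = qapply (qbits mm) (CU a) (liftS (Bq a) (emb lI kW) (qq_final (Bq a) (\<phi> b) (U0f a) (Usf a)))"
proof -
  have "qcc_run mm prot a b (\<lambda>xs. if xs = replicate mm False then 1 else 0)
      = qcc_run mm [(True, AU Tm, {}), (True, CU, {})] a b
          (qcc_run mm (concat (map rnd [0..<Tm])) a b (liftS (Bq a) (emb lI kW) (preS (Bq a) (\<phi> b) (U0f a # Usf a) 0)))"
    unfolding prot_def qcc_run_append init_lift[of a "\<phi> b" "U0f a # Usf a"] ..
  also have "\<dots> = qcc_run mm [(True, AU Tm, {}), (True, CU, {})] a b
          (liftS (Bq a) (emb lI kW) (preS (Bq a) (\<phi> b) (U0f a # Usf a) Tm))"
    unfolding run_loop[OF lx] ..
  also have "\<dots> = qapply (qbits mm) (CU a) (liftS (Bq a) (emb lI kW) (qq_final (Bq a) (\<phi> b) (U0f a) (Usf a)))"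
    using final_AU[of a "\<phi> b"] by simp
  finally show ?thesis .
qed

lemma prob_CU:
  "(\<Sum>xs\<in>{xs\<in>qbits mm. xs ! (lI + kW + 2) = v}. (cmod (qapply (qbits mm) (CU a) (liftS (Bq a) (emb lI kW) s) xs))\<^sup>2)
   = (\<Sum>k\<in>{k\<in>Bq a. outf a k = v}. (cmod (s k))\<^sup>2)"
proof -
  define B where "B = Bq a"
  define e where "e = emb lI kW"
  define \<sigma> where "\<sigma> = sC B e (outf a) (lI + kW + 2)"
  define h where "h k = embp lI kW k @ [outf a k]" for k
  define K where "K = {k\<in>B. outf a k = v}"
  define X where "X = {xs\<in>qbits mm. xs ! (lI + kW + 2) = v}"
  define F where "F xs = (cmod (liftS B e s (\<sigma> xs)))\<^sup>2" for xs
  have injp: "inj_on (embp lI kW) B" unfolding B_def Bq_def by (rule embp_inj[OF GlI WkW])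
  have injB: "inj_on e B" unfolding B_def e_def by (rule inj_e)
  have imgB: "e ` B \<subseteq> qbits mm" unfolding B_def e_def by (rule img_e)
  have sig_e: "\<sigma> (e k) = h k" if "k \<in> B" for k
    unfolding \<sigma>_def e_def h_def by (rule sC_emb[OF injp that])
  have sinv: "\<sigma> (\<sigma> xs) = xs" for xs unfolding \<sigma>_def by (rule sC_invol)
  have hn: "h k ! (lI + kW + 2) = outf a k" for k
    unfolding h_def using nth_append_length[of "embp lI kW k" "outf a k" "[]"] by simp
  have hl: "length (h k) = mm" for k unfolding h_def mm_def by simp
  have ap: "qapply (qbits mm) (CU a) (liftS B e s) = (\<lambda>xs. if length xs = mm then liftS B e s (\<sigma> xs) else 0)"
    unfolding CU_def \<sigma>_def B_def e_def by (rule qapply_perm_list[OF sC_len sC_invol])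
  have "(\<Sum>xs\<in>X. (cmod (qapply (qbits mm) (CU a) (liftS B e s) xs))\<^sup>2) = (\<Sum>xs\<in>X. F xs)"
    unfolding ap F_def X_def by (intro sum.cong) (auto simp: qbits_def)
  also have "\<dots> = (\<Sum>xs\<in>h ` K. F xs)"
  proof (rule sum.mono_neutral_right)
    show "finite X" unfolding X_def using finite_qbits by simp
    show "h ` K \<subseteq> X" unfolding X_def K_def qbits_def using hl hn by auto
    show "\<forall>xs\<in>X - h ` K. F xs = 0"
    proof
      fix xs assume xs: "xs \<in> X - h ` K"
      have "\<sigma> xs \<notin> e ` B"
      proof
        assume "\<sigma> xs \<in> e ` B"
        then obtain k where k: "k \<in> B" "\<sigma> xs = e k" by auto
        hence "xs = h k" using sinv sig_e by metis
        moreover hence "outf a k = v" using xs hn unfolding X_def by auto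
        ultimately show False using xs k unfolding K_def by auto
      qed
      thus "F xs = 0" unfolding F_def liftS_def by simp
    qed
  qed
  also have "\<dots> = (\<Sum>k\<in>K. F (h k))"
  proof (rule sum.reindex[unfolded comp_def])
    show "inj_on h K"
    proof (rule inj_onI)
      fix k k' assume "k \<in> K" "k' \<in> K" "h k = h k'"
      hence "embp lI kW k = embp lI kW k'" "k \<in> B" "k' \<in> B" unfolding h_def K_def by auto
      thus "k = k'" using injp by (auto dest: inj_onD)
    qed
  qed
  also have "\<dots> = (\<Sum>k\<in>K. (cmod (s k))\<^sup>2)"
  proof (intro sum.cong refl)
    fix k assume "k \<in> K"
    hence k: "k \<in> B" unfolding K_def by simp
    have "\<sigma> (h k) = e k" using sig_e[OF k] sinv by metis
    thus "F (h k) = (cmod (s k))\<^sup>2" unfolding F_def liftS_def using k injB by simp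
  qed
  finally show ?thesis unfolding X_def K_def B_def e_def .
qed

end


lemma Q_bound:
  fixes N1 N2 G :: nat and f :: "bool list \<Rightarrow> bool list \<Rightarrow> bool option" and \<phi> :: "bool list \<Rightarrow> bool list"
  assumes ext: "is_extension N2 G \<phi>"
  defines "r \<equiv> Max (insert 0 ((\<lambda>g. Q_query G (ext_fun N2 \<phi> g)) ` Mar N1 N2 f))"
  shows "Q_CC N1 N2 f \<le> real (2 * (nbits (Suc G) + 2)) * r"
proof -
  define A where "A = {a. \<exists>b. (a, b) \<in> pdom N1 N2 f}"
  define g where "g a = ext_fun N2 \<phi> (marg N1 N2 f a)" for a
  define good where "good a W U0 Us out \<longleftrightarrow> 0 < W \<and> unitary_on (qbasis G W) U0 \<and> (\<forall>U\<in>set Us. unitary_on (qbasis G W) U) \<and>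
      (\<forall>x\<in>qdom G (g a). (\<Sum>k\<in>{k\<in>qbasis G W. out k = the (g a x)}. (cmod (qq_final (qbasis G W) x U0 Us k))\<^sup>2) \<ge> 2/3)"
    for a W U0 Us and out :: "nat \<times> bool \<times> nat \<Rightarrow> bool"
  define S where "S a = {T. \<exists>W U0 Us out. length Us = T \<and> good a W U0 Us out}" for a
  have S_eq: "Q_query G (g a) = real (Inf (S a))" for a
    unfolding Q_query_def S_def good_def by (simp add: conj_commute conj_left_commute)
  have Sne: "S a \<noteq> {}" for a
    using Q_set_nonempty[of G "g a"] unfolding S_def good_def by blast
  define P where "P a W U0 Us out \<longleftrightarrow> length Us = Inf (S a) \<and> good a W U0 Us out" for a W U0 Us out
  have exP: "\<exists>z. P a (fst z) (fst (snd z)) (fst (snd (snd z))) (snd (snd (snd z)))" for a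
  proof -
    have "Inf (S a) \<in> S a" using Sne by (rule Inf_nat_def1)
    then obtain W U0 Us out where "P a W U0 Us out" unfolding S_def P_def by blast
    thus ?thesis by (intro exI[of _ "(W, U0, Us, out)"]) simp
  qed
  define triv :: "nat \<times> (nat \<times> bool \<times> nat \<Rightarrow> nat \<times> bool \<times> nat \<Rightarrow> complex) \<times> (nat \<times> bool \<times> nat \<Rightarrow> nat \<times> bool \<times> nat \<Rightarrow> complex) list \<times> (nat \<times> bool \<times> nat \<Rightarrow> bool)"
    where "triv = (1, permU id, [], \<lambda>_. False)"
  define alg where "alg a = (if a \<in> A then (SOME z. P a (fst z) (fst (snd z)) (fst (snd (snd z))) (snd (snd (snd z)))) else triv)" for a
  define Wf where "Wf a = fst (alg a)" for a
  define U0f where "U0f a = fst (snd (alg a))" for a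
  define Usf where "Usf a = fst (snd (snd (alg a)))" for a
  define outf where "outf a = snd (snd (snd (alg a)))" for a
  have algA: "P a (Wf a) (U0f a) (Usf a) (outf a)" if "a \<in> A" for a
    unfolding Wf_def U0f_def Usf_def outf_def alg_def using that someI_ex[OF exP[of a]] by simp
  have algN: "Wf a = 1 \<and> U0f a = permU id \<and> Usf a = []" if "a \<notin> A" for a
    unfolding Wf_def U0f_def Usf_def alg_def triv_def using that by simp
  have un1: "unitary_on (qbasis G 1) (permU id)" by (rule permU_unitary) (auto simp: finite_qbasis)
  have finA: "finite A" unfolding A_def by (rule finite_domA)
  define Tm where "Tm = Max (insert 0 ((\<lambda>a. length (Usf a)) ` A))"
  define kW where "kW = nbits (Max (insert 1 (Wf ` A)))"
  define lI where "lI = nbits (Suc G)"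
  have TTm: "length (Usf a) \<le> Tm" for a
    using finA algN[of a] unfolding Tm_def by (cases "a \<in> A") auto
  have WkW: "Wf a \<le> 2 ^ kW" for a
  proof -
    have "Wf a \<le> Max (insert 1 (Wf ` A))" using finA algN[of a] by (cases "a \<in> A") auto
    also have "\<dots> \<le> 2 ^ kW" unfolding kW_def by (rule nbits_ge)
    finally show ?thesis .
  qed
  have GlI: "G < 2 ^ lI" using nbits_ge[of "Suc G"] unfolding lI_def by simp
  have Wpos: "0 < Wf a" for a using algA[of a] algN[of a] unfolding P_def good_def by (cases "a \<in> A") auto
  have U0u: "unitary_on (qbasis G (Wf a)) (U0f a)" for a
    using algA[of a] algN[of a] un1 unfolding P_def good_def by (cases "a \<in> A") auto
  have Usu: "unitary_on (qbasis G (Wf a)) U" if "U \<in> set (Usf a)" for a U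
    using algA[of a] algN[of a] that unfolding P_def good_def by (cases "a \<in> A") auto
  interpret q: qprot G lI kW Tm Wf U0f Usf outf \<phi>
    by unfold_locales (use GlI Wpos WkW U0u Usu TTm in auto)
  have Tm_r: "real Tm \<le> r"
  proof -
    have "Tm \<in> insert 0 ((\<lambda>a. length (Usf a)) ` A)" unfolding Tm_def using finA by (intro Max_in) auto
    moreover have "0 \<le> r" unfolding r_def using Mar_finite by (simp add: Max_ge)
    moreover have "real (length (Usf a)) \<le> r" if aA: "a \<in> A" for a
    proof -
      obtain b where "(a, b) \<in> pdom N1 N2 f" using aA unfolding A_def by auto
      hence "Q_query G (g a) \<le> r" unfolding r_def g_def by (rule Max_marg)
      thus ?thesis using algA[OF aA] S_eq[of a] unfolding P_def by simp
    qed
    ultimately show ?thesis by auto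
  qed
  have succ: "(\<Sum>xs\<in>{xs\<in>qbits q.mm. xs ! (lI + kW + 2) = the (f a b)}.
            (cmod (qcc_run q.mm q.prot a b (\<lambda>xs. if xs = replicate q.mm False then 1 else 0) xs))\<^sup>2) \<ge> 2/3"
    if ab: "(a, b) \<in> pdom N1 N2 f" for a b
  proof -
    have aA: "a \<in> A" using ab unfolding A_def by auto
    have lb: "length (\<phi> b) = G" using ext ab unfolding is_extension_def pdom_def by auto
    have xq: "\<phi> b \<in> qdom G (g a)" and v: "the (g a (\<phi> b)) = the (f a b)"
      using pdom_qdom[OF ext ab] unfolding g_def by auto
    have "(\<Sum>xs\<in>{xs\<in>qbits q.mm. xs ! (lI + kW + 2) = the (f a b)}.
            (cmod (qcc_run q.mm q.prot a b (\<lambda>xs. if xs = replicate q.mm False then 1 else 0) xs))\<^sup>2)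
        = (\<Sum>k\<in>{k\<in>q.Bq a. outf a k = the (f a b)}. (cmod (qq_final (q.Bq a) (\<phi> b) (U0f a) (Usf a) k))\<^sup>2)"
      unfolding q.full_run[OF lb] by (rule q.prob_CU)
    also have "\<dots> \<ge> 2/3" using algA[OF aA] xq v unfolding P_def good_def q.Bq_def by auto
    finally show ?thesis .
  qed
  have "Q_CC N1 N2 f \<le> real (qcc_cost q.prot)"
    unfolding Q_CC_def
  proof (intro of_nat_mono Inf_nat_le CollectI)
    show "\<exists>m own rs oq. oq < m \<and> qcc_valid N1 N2 m own rs \<and> qcc_cost q.prot = qcc_cost rs \<and>
      (\<forall>(a, b)\<in>pdom N1 N2 f.
         (\<Sum>xs\<in>{xs\<in>qbits m. xs ! oq = the (f a b)}.
            (cmod (qcc_run m rs a b (\<lambda>xs. if xs = replicate m False then 1 else 0) xs))\<^sup>2) \<ge> 2/3)"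
      by (rule exI[of _ q.mm], rule exI[of _ "\<lambda>_. True"], rule exI[of _ q.prot], rule exI[of _ "lI + kW + 2"])
         (use q.valid_prot succ in \<open>auto simp: q.mm_def\<close>)
  qed
  also have "\<dots> = real Tm * real (2 * (lI + 2))" unfolding q.cost_prot by (simp only: of_nat_mult)
  also have "\<dots> \<le> r * real (2 * (lI + 2))" using Tm_r by (intro mult_right_mono) auto
  finally show ?thesis unfolding lI_def by (simp add: mult.commute)
qed


lemma lg_facts:
  assumes "2 \<le> G"
  shows "1 \<le> log 2 (real G)" "real (nbits G) \<le> log 2 (real G) + 1" "real (nbits (Suc G)) \<le> log 2 (real G) + 2"
proof -
  show "1 \<le> log 2 (real G)" using assms by (simp add: le_log_iff)
  show "real (nbits G) \<le> log 2 (real G) + 1" using assms by (intro nbits_log) auto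
  have "real (nbits (Suc G)) \<le> log 2 (real (Suc G)) + 1" by (intro nbits_log) auto
  also have "log 2 (real (Suc G)) \<le> log 2 (2 * real G)" using assms by (intro log_le_cancel_iff[THEN iffD2]) auto
  also have "log 2 (2 * real G) = 1 + log 2 (real G)" using assms by (simp add: log_mult)
  finally show "real (nbits (Suc G)) \<le> log 2 (real G) + 2" by simp
qed

lemma final_one:
  assumes "N2 \<le> G" "2 \<le> G"
    and H: "\<And>\<phi>. is_extension N2 G \<phi> \<Longrightarrow> X \<le> 12 * log 2 (real G) * (Max (insert 0 ((\<lambda>g. C G (ext_fun N2 \<phi> g)) ` Mar N1 N2 f)) + 1)"
  shows "1 / 12 * X \<le> log 2 (real G) * (ext_cplx C N2 G (Mar N1 N2 f) + 1)"
proof -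
  have lg: "1 \<le> log 2 (real G)" using lg_facts(1)[OF assms(2)] .
  have "X \<le> 12 * log 2 (real G) * (ext_cplx C N2 G (Mar N1 N2 f) + 1)"
    by (rule ext_bound[OF assms(1)]) (use lg H in auto)
  thus ?thesis by simp
qed

lemma rnonneg: "0 \<le> Max (insert (0::real) ((\<lambda>g. C G (ext_fun N2 \<phi> g)) ` Mar N1 N2 f))"
  using Mar_finite by (simp add: Max_ge)

theorem theorem18:
  shows "\<exists>c>0. \<forall>N1 N2 G f. 2 \<le> G \<and> N2 \<le> G \<longrightarrow>
      c * R_CC N1 N2 f \<le> log 2 (real G) * (ext_cplx R_query N2 G (Mar N1 N2 f) + 1) \<and>
      c * D_CC N1 N2 f \<le> log 2 (real G) * (ext_cplx D_query N2 G (Mar N1 N2 f) + 1) \<and>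
      c * R0_CC N1 N2 f \<le> log 2 (real G) * (ext_cplx R0_query N2 G (Mar N1 N2 f) + 1) \<and>
      c * Q_CC N1 N2 f \<le> log 2 (real G) * (ext_cplx Q_query N2 G (Mar N1 N2 f) + 1)"
proof (intro exI[of _ "1/12"] conjI allI impI)
  show "(0::real) < 1 / 12" by simp
  fix N1 N2 G :: nat and f :: "bool list \<Rightarrow> bool list \<Rightarrow> bool option" assume a: "2 \<le> G \<and> N2 \<le> G"
  hence G2: "2 \<le> G" and NG: "N2 \<le> G" by auto
  define lg where "lg = log 2 (real G)"
  have lg1: "1 \<le> lg" and nb: "real (nbits G) \<le> lg + 1" and nb2: "real (nbits (Suc G)) \<le> lg + 2"
    using lg_facts[OF G2] unfolding lg_def by auto
  have K: "real (nbits G + 2) * (r + 1) \<le> 12 * lg * (r + 1)" if "0 \<le> r" for r :: real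
  proof -
    have "real (nbits G + 2) \<le> 12 * lg" using nb lg1 by simp
    thus ?thesis using that by (intro mult_right_mono) auto
  qed
  show "1 / 12 * R_CC N1 N2 f \<le> log 2 (real G) * (ext_cplx R_query N2 G (Mar N1 N2 f) + 1)"
  proof (rule final_one[OF NG G2])
    fix \<phi> assume e: "is_extension N2 G \<phi>"
    show "R_CC N1 N2 f \<le> 12 * log 2 (real G) * (Max (insert 0 ((\<lambda>g. R_query G (ext_fun N2 \<phi> g)) ` Mar N1 N2 f)) + 1)"
    proof -
      define r where "r = Max (insert 0 ((\<lambda>g. R_query G (ext_fun N2 \<phi> g)) ` Mar N1 N2 f))"
      have r0: "0 \<le> r" unfolding r_def by (rule rnonneg)
      have "R_CC N1 N2 f \<le> real (nbits G + 2) * (r + 1)" unfolding r_def by (rule R_bound[OF e])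
      also have "\<dots> \<le> 12 * lg * (r + 1)" by (rule K[OF r0])
      finally show ?thesis unfolding r_def lg_def .
    qed
  qed
  show "1 / 12 * D_CC N1 N2 f \<le> log 2 (real G) * (ext_cplx D_query N2 G (Mar N1 N2 f) + 1)"
  proof (rule final_one[OF NG G2])
    fix \<phi> assume e: "is_extension N2 G \<phi>"
    show "D_CC N1 N2 f \<le> 12 * log 2 (real G) * (Max (insert 0 ((\<lambda>g. D_query G (ext_fun N2 \<phi> g)) ` Mar N1 N2 f)) + 1)"
    proof -
      define r where "r = Max (insert 0 ((\<lambda>g. D_query G (ext_fun N2 \<phi> g)) ` Mar N1 N2 f))"
      have r0: "0 \<le> r" unfolding r_def by (rule rnonneg)
      have "D_CC N1 N2 f \<le> real (nbits G + 2) * (r + 1)" unfolding r_def by (rule D_bound[OF e])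
      also have "\<dots> \<le> 12 * lg * (r + 1)" by (rule K[OF r0])
      finally show ?thesis unfolding r_def lg_def .
    qed
  qed
  show "1 / 12 * R0_CC N1 N2 f \<le> log 2 (real G) * (ext_cplx R0_query N2 G (Mar N1 N2 f) + 1)"
  proof (rule final_one[OF NG G2])
    fix \<phi> assume e: "is_extension N2 G \<phi>"
    define r where "r = Max (insert 0 ((\<lambda>g. R0_query G (ext_fun N2 \<phi> g)) ` Mar N1 N2 f))"
    have r0: "0 \<le> r" unfolding r_def by (rule rnonneg)
    have "R0_CC N1 N2 f \<le> real (nbits G + 2) * (r + 1) + 2" unfolding r_def by (rule R0_bound[OF e])
    also have "\<dots> \<le> real (nbits G + 4) * (r + 1)" using r0 by (simp add: algebra_simps)
    also have "\<dots> \<le> 12 * lg * (r + 1)"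
    proof -
      have "real (nbits G + 4) \<le> 12 * lg" using nb lg1 by simp
      thus ?thesis using r0 by (intro mult_right_mono) auto
    qed
    finally show "R0_CC N1 N2 f \<le> 12 * log 2 (real G) * (r + 1)" unfolding lg_def .
  qed
  show "1 / 12 * Q_CC N1 N2 f \<le> log 2 (real G) * (ext_cplx Q_query N2 G (Mar N1 N2 f) + 1)"
  proof (rule final_one[OF NG G2])
    fix \<phi> assume e: "is_extension N2 G \<phi>"
    define r where "r = Max (insert 0 ((\<lambda>g. Q_query G (ext_fun N2 \<phi> g)) ` Mar N1 N2 f))"
    have r0: "0 \<le> r" unfolding r_def by (rule rnonneg)
    have "Q_CC N1 N2 f \<le> real (2 * (nbits (Suc G) + 2)) * r" unfolding r_def by (rule Q_bound[OF e])
    also have "\<dots> \<le> 12 * lg * (r + 1)"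
    proof -
      have "real (2 * (nbits (Suc G) + 2)) \<le> 12 * lg" using nb2 lg1 by simp
      thus ?thesis using r0 by (intro mult_mono) auto
    qed
    finally show "Q_CC N1 N2 f \<le> 12 * log 2 (real G) * (r + 1)" unfolding lg_def .
  qed
qed


end
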